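(* Let $\mathcal X$ be locally convex and let $\rho$ be proper, convex and lower semicontinuous. Assume $(\mathcal X,\mathcal X')$ is an admissible pair, $\mathcal A$ is a closed convex cone with $\mathcal A\cap(-\mathcal A)=\{0\}$, $\mathcal P$ is closed, $V_0$ is lower semicontinuous, $V_1$ is anti-star shaped and upper semicontinuous, and $\mathcal L=\{0\}$. Then $\mathcal D_{str}$ is nonempty, $\sigma_{\mathcal A}(\psi)=0$ for every $\psi\in\mathcal D_{str}$, and $$\rho(X)=\sup_{\psi\in\mathcal D_{str}}\{\sigma_{\mathcal P,V_0,V_1}(\psi)-\psi(X)\}\quad\text{for all }X\in\mathcal X.$$
   Context: Standing setup: Let $\mathcal{X}$ be a real topological vector space partially ordered by a convex cone $\mathcal{X}_+\subset\mathcal X$; write $X\ge Y$ iff $X-Y\in\mathcal X_+$. Fix $N\in\mathbb N$ and: a set $\mathcal P\subset\mathbb R^N$ with $0\in\mathcal P$; a function $V_0:\mathbb R^N\to\mathbb R$ with $V_0(0)=0$ and $V_0(x)\ge -V_0(-x)$ for all $x\in\mathbb R^N$; a map $V_1:\mathbb R^N\to\mathcal X$ with $V_1(0)=0$ and $V_1(x)\le -V_1(-x)$ for all $x\in\mathbb R^N$; a set $\mathcal A\subset\mathcal X$ with $0\in\mathcal A$ and $\mathcal A+\mathcal X_+\subset\mathcal A$. The risk measure is $\rho:\mathcal X\to[-\infty,\infty]$, $\rho(X)=\inf\{V_0(x): x\in\mathcal P,\ X+V_1(x)\in\mathcal A\}$, with $\inf\emptyset=+\infty$. $\rho$ is proper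 if it never takes the value $-\infty$ and is not identically $+\infty$. $V_1$ is anti-star shaped if $V_1(\lambda x)\ge\lambda V_1(x)$ for all $\lambda\in[0,1]$, $x\in\mathbb R^N$; it is upper semicontinuous at $x$ if for every neighborhood $\mathcal U$ of $V_1(x)$ there exists a neighborhood $\mathcal V$ of $x$ with $V_1(\mathcal V)\subset\mathcal U-\mathcal X_+$, and upper semicontinuous if this holds at every $x$. Asymptotic notions: for a nonempty set $C$ in a topological vector space, $C^\infty=\{X:\exists\text{ nets }(X_\alpha)\subset C,\ (\lambda_\alpha)\subset[0,\infty),\ \lambda_\alpha\to0,\ \lambda_\alpha X_\alpha\to X\}$. For $f:\mathbb R^N\to\mathbb R$, its asymptotic function $f^\infty$ is the function whose epigraph equals $(\operatorname{epi}f)^\infty$, where $\operatorname{epi}f=\{(x,m)\in\mathbb R^N\times\mathbb R: f(x)\le m\}$. $\mathcal L=\{x\in\mathcal P^\infty: V_0^\infty(x)\le0,\ V_1(x)\in\mathcal A^\infty\}$. Duality notation: $\mathcal X'$ is the topological dual of $\mathcal X$. For $\psi\in\mathcal X'$: $\sigma_{\mathcal A}(\psi)=\inf_{X\in\mathcal A}\psi(X)$ and $\sigma_{\mathcal P,V_0,V_1}(\psi)=\inf_{x\in\mathcal P}\{V_0(x)-\psi(V_1(x))\}$. $\mathcal D=\{\psi\in\mathcal X':\sigma_{\mathcal A}(\psi)>-\infty,\ \sigma_{\mathcal P,V_0,V_1}(\psi)>-\infty\}$ and $\mathcal D_{str}=\{\psi\in\mathcal D:\psi(X)>0\ \forall X\in\mathcal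 A\setminus\{0\}\}$. $(\mathcal X,\mathcal X')$ is an admissible pair if there exists a separable normed space $\mathcal Y$ such that $\mathcal X'$ is (identified with) the norm dual of $\mathcal Y$ and the topology $\sigma(\mathcal X',\mathcal X)$ is weaker than $\sigma(\mathcal X',\mathcal Y)$. *)

theory Defs
  imports "HOL-Analysis.Analysis" "HOL-Library.Extended_Real"
begin

definition tvs :: "'x::{real_vector,topological_space} itself \<Rightarrow> bool" where
  "tvs _ \<longleftrightarrow>
     continuous_on UNIV (\<lambda>p::'x \<times> 'x. fst p + snd p) \<and>
     continuous_on UNIV (\<lambda>p::real \<times> 'x. fst p *\<^sub>R snd p)"

definition locally_convex :: "'x::{real_vector,topological_space} itself \<Rightarrow> bool" where
  "locally_convex _ \<longleftrightarrow> tvs TYPE('x) \<and>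
     (\<forall>U::'x set. open U \<and> 0 \<in> U \<longrightarrow> (\<exists>V. open V \<and> convex V \<and> 0 \<in> V \<and> V \<subseteq> U))"

definition lsc :: "('a::topological_space \<Rightarrow> 'b::linorder) \<Rightarrow> bool" where
  "lsc f \<longleftrightarrow> (\<forall>x c. c < f x \<longrightarrow> (\<exists>U. open U \<and> x \<in> U \<and> (\<forall>y\<in>U. c < f y)))"

definition usc_wrt :: "'x::{real_vector,topological_space} set \<Rightarrow> ('a::topological_space \<Rightarrow> 'x) \<Rightarrow> bool" where
  "usc_wrt Xp V1 \<longleftrightarrow> (\<forall>x U. open U \<and> V1 x \<in> U \<longrightarrow>
      (\<exists>V. open V \<and> x \<in> V \<and> V1 ` V \<subseteq> {u - p |u p. u \<in> U \<and> p \<in> Xp}))"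

definition anti_star_shaped :: "'x::real_vector set \<Rightarrow> ('a::real_vector \<Rightarrow> 'x) \<Rightarrow> bool" where
  "anti_star_shaped Xp V1 \<longleftrightarrow> (\<forall>l x. 0 \<le> l \<and> l \<le> 1 \<longrightarrow> V1 (l *\<^sub>R x) - l *\<^sub>R V1 x \<in> Xp)"

definition rho :: "(real^'n) set \<Rightarrow> (real^'n \<Rightarrow> real) \<Rightarrow> (real^'n \<Rightarrow> 'x::real_vector) \<Rightarrow> 'x set \<Rightarrow> 'x \<Rightarrow> ereal" where
  "rho P V0 V1 A X = Inf ((\<lambda>x. ereal (V0 x)) ` {x \<in> P. X + V1 x \<in> A})"

definition proper_fun :: "('x \<Rightarrow> ereal) \<Rightarrow> bool" where
  "proper_fun f \<longleftrightarrow> (\<forall>X. f X \<noteq> -\<infinity>) \<and> (\<exists>X. f X \<noteq> \<infinity>)"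

definition convex_efun :: "('x::real_vector \<Rightarrow> ereal) \<Rightarrow> bool" where
  "convex_efun f \<longleftrightarrow> convex {(X, m::real). f X \<le> ereal m}"

text \<open>Nets are represented by (proper) filters on the set of pairs (X_alpha, lambda_alpha).\<close>
definition asym_cone :: "'a::{real_vector,topological_space} set \<Rightarrow> 'a set" where
  "asym_cone C = {X. \<exists>F :: ('a \<times> real) filter. F \<noteq> bot \<and>
      eventually (\<lambda>p. fst p \<in> C \<and> 0 \<le> snd p) F \<and>
      ((\<lambda>p. snd p) \<longlongrightarrow> 0) F \<and>
      ((\<lambda>p. snd p *\<^sub>R fst p) \<longlongrightarrow> X) F}"

definition epi :: "('a \<Rightarrow> real) \<Rightarrow> ('a \<times> real) set" where
  "epi f = {(x, m). f x \<le> m}"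

definition asym_fun :: "('a::{real_vector,topological_space} \<Rightarrow> real) \<Rightarrow> 'a \<Rightarrow> ereal" where
  "asym_fun f x = Inf {ereal m |m. (x, m) \<in> asym_cone (epi f)}"

definition LL :: "(real^'n) set \<Rightarrow> (real^'n \<Rightarrow> real) \<Rightarrow> (real^'n \<Rightarrow> 'x::{real_vector,topological_space}) \<Rightarrow> 'x set \<Rightarrow> (real^'n) set" where
  "LL P V0 V1 A = {x \<in> asym_cone P. asym_fun V0 x \<le> 0 \<and> V1 x \<in> asym_cone A}"

definition topdual :: "'x::{real_vector,topological_space} itself \<Rightarrow> ('x \<Rightarrow> real) set" where
  "topdual _ = {\<psi>. linear \<psi> \<and> continuous_on UNIV \<psi>}"

definition sigmaA :: "'x set \<Rightarrow> ('x \<Rightarrow> real) \<Rightarrow> ereal" where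
  "sigmaA A \<psi> = Inf ((\<lambda>X. ereal (\<psi> X)) ` A)"

definition sigmaPV :: "(real^'n) set \<Rightarrow> (real^'n \<Rightarrow> real) \<Rightarrow> (real^'n \<Rightarrow> 'x) \<Rightarrow> ('x \<Rightarrow> real) \<Rightarrow> ereal" where
  "sigmaPV P V0 V1 \<psi> = Inf ((\<lambda>x. ereal (V0 x - \<psi> (V1 x))) ` P)"

definition DD :: "(real^'n) set \<Rightarrow> (real^'n \<Rightarrow> real) \<Rightarrow> (real^'n \<Rightarrow> 'x::{real_vector,topological_space}) \<Rightarrow> 'x set \<Rightarrow> ('x \<Rightarrow> real) set" where
  "DD P V0 V1 A = {\<psi> \<in> topdual TYPE('x). sigmaA A \<psi> > -\<infinity> \<and> sigmaPV P V0 V1 \<psi> > -\<infinity>}"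

definition DDstr :: "(real^'n) set \<Rightarrow> (real^'n \<Rightarrow> real) \<Rightarrow> (real^'n \<Rightarrow> 'x::{real_vector,topological_space}) \<Rightarrow> 'x set \<Rightarrow> ('x \<Rightarrow> real) set" where
  "DDstr P V0 V1 A = {\<psi> \<in> DD P V0 V1 A. \<forall>X \<in> A - {0}. \<psi> X > 0}"

definition weak_top :: "'a set \<Rightarrow> ('a \<Rightarrow> real) set \<Rightarrow> 'a topology" where
  "weak_top S fs = topology_generated_by {{a \<in> S. f a \<in> U} |f U. f \<in> fs \<and> open U}"

text \<open>(X, X') is an admissible pair, witnessed by the separable normed space 'y:
  X' is identified (via a linear bijection Phi) with the norm dual of 'y, and
  sigma(X',X) is weaker than sigma(X','y).\<close>
definition admissible_pair_via :: "'y::real_normed_vector itself \<Rightarrow> 'x::{real_vector,topological_space} itself \<Rightarrow> bool" where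
  "admissible_pair_via _ _ \<longleftrightarrow>
     (\<exists>D::'y set. countable D \<and> closure D = UNIV) \<and>
     (\<exists>Phi :: ('x \<Rightarrow> real) \<Rightarrow> ('y \<Rightarrow> real).
        bij_betw Phi (topdual TYPE('x)) {g. bounded_linear g} \<and>
        (\<forall>\<psi>\<in>topdual TYPE('x). \<forall>\<phi>\<in>topdual TYPE('x). \<forall>a b.
            Phi (\<lambda>X. a * \<psi> X + b * \<phi> X) = (\<lambda>y. a * Phi \<psi> y + b * Phi \<phi> y)) \<and>
        (\<forall>U. openin (weak_top (topdual TYPE('x)) {(\<lambda>\<psi>. \<psi> X) |X. True}) U \<longrightarrow>
             openin (weak_top (topdual TYPE('x)) {(\<lambda>\<psi>. Phi \<psi> y) |y. True}) U))"

end

theory Submission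
  imports Defs
begin

definition sublin :: "('v::real_vector \<Rightarrow> real) \<Rightarrow> bool" where
  "sublin q \<longleftrightarrow> (\<forall>x y. q (x + y) \<le> q x + q y) \<and> (\<forall>t x. 0 \<le> t \<longrightarrow> q (t *\<^sub>R x) = t * q x)"

lemma sublin_0: "sublin q \<Longrightarrow> q 0 = 0"
  unfolding sublin_def by (metis mult_zero_left scaleR_zero_left order_refl)

lemma sublin_neg: "sublin q \<Longrightarrow> - q (- x) \<le> q x"
proof -
  assume s: "sublin q"
  have "q (x + - x) \<le> q x + q (- x)" using s unfolding sublin_def by blast
  thus ?thesis using sublin_0[OF s] by simp
qed

definition rz :: "('v::real_vector \<Rightarrow> real) \<Rightarrow> 'v \<Rightarrow> 'v \<Rightarrow> real" where
  "rz q z x = Inf {q (x + t *\<^sub>R z) - t * q z |t. t > 0}"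

lemma rz_bdd:
  assumes s: "sublin q"
  shows "bdd_below {q (x + t *\<^sub>R z) - t * q z |t. t > 0}"
proof -
  have "- q (- x) \<le> q (x + t *\<^sub>R z) - t * q z" if "t > 0" for t
  proof -
    have "q (t *\<^sub>R z) = q ((x + t *\<^sub>R z) + (- x))" by simp
    also have "\<dots> \<le> q (x + t *\<^sub>R z) + q (- x)" using s unfolding sublin_def by blast
    finally show ?thesis using s that unfolding sublin_def by simp
  qed
  thus ?thesis unfolding bdd_below_def by blast
qed

lemma rz_ne: "{q (x + t *\<^sub>R z) - t * q z |t. t > (0::real)} \<noteq> {}"
  using zero_less_one by blast

lemma rz_le_elem:
  assumes s: "sublin q" and t: "t > 0"
  shows "rz q z x \<le> q (x + t *\<^sub>R z) - t * q z"
  unfolding rz_def by (rule cInf_lower) (use t rz_bdd[OF s] in auto)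

lemma rz_ge:
  assumes "\<And>t. t > 0 \<Longrightarrow> c \<le> q (x + t *\<^sub>R z) - t * q z"
  shows "c \<le> rz q z x"
  unfolding rz_def by (rule cInf_greatest) (use assms zero_less_one in blast)+

lemma rz_le:
  assumes s: "sublin q" shows "rz q z x \<le> q x"
proof -
  have "rz q z x \<le> q (x + 1 *\<^sub>R z) - 1 * q z" by (rule rz_le_elem[OF s]) simp
  also have "\<dots> \<le> q x" using s unfolding sublin_def by (smt (verit) scaleR_one)
  finally show ?thesis .
qed

lemma rz_negz:
  assumes s: "sublin q" shows "rz q z (- z) \<le> - q z"
proof -
  have "rz q z (- z) \<le> q (- z + 1 *\<^sub>R z) - 1 * q z" by (rule rz_le_elem[OF s]) simp
  thus ?thesis using sublin_0[OF s] by simp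
qed

lemma rz_sublin:
  assumes s: "sublin q" shows "sublin (rz q z)"
  unfolding sublin_def
proof safe
  fix x y
  have "rz q z (x + y) - (q (y + s *\<^sub>R z) - s * q z) \<le> rz q z x" if "s > 0" for s
  proof (rule rz_ge)
    fix t :: real assume t: "t > 0"
    have "rz q z (x + y) \<le> q ((x + y) + (t + s) *\<^sub>R z) - (t + s) * q z"
      by (rule rz_le_elem[OF s]) (use t that in auto)
    also have "q ((x + y) + (t + s) *\<^sub>R z) \<le> q (x + t *\<^sub>R z) + q (y + s *\<^sub>R z)"
    proof -
      have "(x + y) + (t + s) *\<^sub>R z = (x + t *\<^sub>R z) + (y + s *\<^sub>R z)" by (simp add: algebra_simps)
      thus ?thesis using s unfolding sublin_def by metis
    qed
    finally show "rz q z (x + y) - (q (y + s *\<^sub>R z) - s * q z) \<le> q (x + t *\<^sub>R z) - t * q z"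
      by (simp add: algebra_simps)
  qed
  hence "rz q z (x + y) - rz q z x \<le> rz q z y"
    by (intro rz_ge) (smt (verit))
  thus "rz q z (x + y) \<le> rz q z x + rz q z y" by simp
next
  fix t :: real and x assume t: "0 \<le> t"
  show "rz q z (t *\<^sub>R x) = t * rz q z x"
  proof (cases "t = 0")
    case True
    have "rz q z 0 = 0"
    proof (rule antisym)
      show "rz q z 0 \<le> 0" using rz_le[OF s] sublin_0[OF s] by metis
      show "0 \<le> rz q z 0" by (rule rz_ge) (use s in \<open>simp add: sublin_def\<close>)
    qed
    thus ?thesis using True by simp
  next
    case False
    hence tp: "t > 0" using t by simp
    have e: "q (t *\<^sub>R x + (t * u) *\<^sub>R z) - (t * u) * q z = t * (q (x + u *\<^sub>R z) - u * q z)" for u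
    proof -
      have "t *\<^sub>R x + (t * u) *\<^sub>R z = t *\<^sub>R (x + u *\<^sub>R z)" by (simp add: algebra_simps)
      thus ?thesis using s t unfolding sublin_def by (metis right_diff_distrib mult.assoc)
    qed
    show ?thesis
    proof (rule antisym)
      have "rz q z (t *\<^sub>R x) / t \<le> rz q z x"
      proof (rule rz_ge)
        fix u :: real assume u: "u > 0"
        have "rz q z (t *\<^sub>R x) \<le> q (t *\<^sub>R x + (t * u) *\<^sub>R z) - (t * u) * q z"
          by (rule rz_le_elem[OF s]) (use u tp in simp)
        thus "rz q z (t *\<^sub>R x) / t \<le> q (x + u *\<^sub>R z) - u * q z"
          using e[of u] tp by (simp add: divide_simps mult.commute)
      qed
      thus "rz q z (t *\<^sub>R x) \<le> t * rz q z x" using tp by (simp add: divide_simps mult.commute)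
      have "t * rz q z x \<le> rz q z (t *\<^sub>R x)"
      proof (rule rz_ge)
        fix u :: real assume u: "u > 0"
        have "rz q z x \<le> q (x + (u / t) *\<^sub>R z) - (u / t) * q z"
          by (rule rz_le_elem[OF s]) (use u tp in simp)
        hence "t * rz q z x \<le> t * (q (x + (u / t) *\<^sub>R z) - (u / t) * q z)"
          using tp by simp
        also have "\<dots> = q (t *\<^sub>R x + (t * (u / t)) *\<^sub>R z) - (t * (u / t)) * q z" by (rule e[symmetric])
        also have "\<dots> = q (t *\<^sub>R x + u *\<^sub>R z) - u * q z" using tp by simp
        finally show "t * rz q z x \<le> q (t *\<^sub>R x + u *\<^sub>R z) - u * q z" .
      qed
      thus "t * rz q z x \<le> rz q z (t *\<^sub>R x)" .
    qed
  qed
qed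

definition epif :: "('v \<Rightarrow> real) \<Rightarrow> ('v \<times> real) set" where
  "epif q = {(x, m). q x \<le> m}"

lemma epif_sub: "epif q \<subseteq> epif q' \<longleftrightarrow> (\<forall>x. q' x \<le> q x)"
proof
  assume h: "epif q \<subseteq> epif q'"
  show "\<forall>x. q' x \<le> q x"
  proof
    fix x have "(x, q x) \<in> epif q" unfolding epif_def by simp
    hence "(x, q x) \<in> epif q'" using h by blast
    thus "q' x \<le> q x" unfolding epif_def by simp
  qed
next
  assume "\<forall>x. q' x \<le> q x"
  thus "epif q \<subseteq> epif q'" unfolding epif_def by (auto intro: order_trans)
qed

lemma minimal_sublin:
  fixes p :: "'v::real_vector \<Rightarrow> real"
  assumes sp: "sublin p"
  shows "\<exists>q. sublin q \<and> (\<forall>x. q x \<le> p x) \<and> (\<forall>q'. sublin q' \<and> (\<forall>x. q' x \<le> q x) \<longrightarrow> q' = q)"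
proof -
  define A where "A = {epif q |q. sublin q \<and> (\<forall>x. q x \<le> p x)}"
  have "\<exists>M\<in>A. \<forall>X\<in>A. M \<subseteq> X \<longrightarrow> X = M"
  proof (rule Zorn_Lemma2, rule ballI)
    fix C assume C: "C \<in> chains A"
    show "\<exists>U\<in>A. \<forall>X\<in>C. X \<subseteq> U"
    proof (cases "C = {}")
      case True thus ?thesis using sp unfolding A_def by auto
    next
      case False
      define Q where "Q = {q. epif q \<in> C \<and> sublin q \<and> (\<forall>x. q x \<le> p x)}"
      have CQ: "\<forall>X\<in>C. \<exists>q\<in>Q. X = epif q" using C unfolding chains_def A_def Q_def by auto
      hence Qne: "Q \<noteq> {}" using False by auto
      have comp: "(\<forall>x. q1 x \<le> q2 x) \<or> (\<forall>x. q2 x \<le> q1 x)" if "q1 \<in> Q" "q2 \<in> Q" for q1 q2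
      proof -
        have "epif q1 \<subseteq> epif q2 \<or> epif q2 \<subseteq> epif q1"
          using C that unfolding chains_def chain_subset_def Q_def by blast
        thus ?thesis unfolding epif_sub by blast
      qed
      define m where "m x = Inf ((\<lambda>q. q x) ` Q)" for x
      have bdd: "bdd_below ((\<lambda>q. q x) ` Q)" for x
      proof -
        have "- p (- x) \<le> q x" if "q \<in> Q" for q
          using sublin_neg[of q x] that unfolding Q_def by (smt (verit) mem_Collect_eq)
        thus ?thesis by (auto simp: bdd_below_def)
      qed
      have mle: "m x \<le> q x" if "q \<in> Q" for q x
        unfolding m_def by (rule cInf_lower) (use that bdd in auto)
      have mge: "c \<le> m x" if "\<And>q. q \<in> Q \<Longrightarrow> c \<le> q x" for c x
        unfolding m_def by (rule cInf_greatest) (use that Qne in auto)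
      have Qs: "sublin q" if "q \<in> Q" for q using that unfolding Q_def by auto
      have sm: "sublin m"
        unfolding sublin_def
      proof safe
        fix x y
        have "m (x + y) \<le> q1 x + q2 y" if "q1 \<in> Q" "q2 \<in> Q" for q1 q2
        proof (cases "\<forall>x. q2 x \<le> q1 x")
          case True
          have "m (x + y) \<le> q2 (x + y)" by (rule mle[OF that(2)])
          also have "\<dots> \<le> q2 x + q2 y" using Qs[OF that(2)] unfolding sublin_def by blast
          finally show ?thesis using True[rule_format, of x] by linarith
        next
          case False
          hence T: "\<forall>x. q1 x \<le> q2 x" using comp[OF that] by blast
          have "m (x + y) \<le> q1 (x + y)" by (rule mle[OF that(1)])
          also have "\<dots> \<le> q1 x + q1 y" using Qs[OF that(1)] unfolding sublin_def by blast
          finally show ?thesis using T[rule_format, of y] by linarith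
        qed
        hence "m (x + y) - q2 y \<le> m x" if "q2 \<in> Q" for q2
          using that by (intro mge) (smt (verit))
        hence "m (x + y) - m x \<le> m y" by (intro mge) (smt (verit))
        thus "m (x + y) \<le> m x + m y" by simp
      next
        fix t :: real and x assume t: "0 \<le> t"
        have "t * m x \<le> m (t *\<^sub>R x)"
        proof (rule mge)
          fix q assume q: "q \<in> Q"
          have "t * m x \<le> t * q x" using mle[OF q] t by (simp add: mult_left_mono)
          thus "t * m x \<le> q (t *\<^sub>R x)" using Qs[OF q] t unfolding sublin_def by simp
        qed
        moreover have "m (t *\<^sub>R x) \<le> t * m x"
        proof (cases "t = 0")
          case True
          obtain q where q: "q \<in> Q" using Qne by auto
          show ?thesis using mle[OF q, of 0] sublin_0[OF Qs[OF q]] True by simp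
        next
          case False
          hence tp: "t > 0" using t by simp
          have "m (t *\<^sub>R x) / t \<le> m x"
          proof (rule mge)
            fix q assume q: "q \<in> Q"
            have "m (t *\<^sub>R x) \<le> t * q x" using mle[OF q, of "t *\<^sub>R x"] Qs[OF q] t unfolding sublin_def by simp
            thus "m (t *\<^sub>R x) / t \<le> q x" using tp by (simp add: divide_simps mult.commute)
          qed
          thus ?thesis using tp by (simp add: divide_simps mult.commute)
        qed
        ultimately show "m (t *\<^sub>R x) = t * m x" by simp
      qed
      have "m x \<le> p x" for x
      proof -
        obtain q where q: "q \<in> Q" using Qne by auto
        thus ?thesis using mle[OF q, of x] unfolding Q_def by (blast intro: order_trans)
      qed
      hence "epif m \<in> A" using sm unfolding A_def by auto
      moreover have "\<forall>X\<in>C. X \<subseteq> epif m"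
      proof
        fix X assume "X \<in> C"
        then obtain q where "q \<in> Q" "X = epif q" using CQ by blast
        thus "X \<subseteq> epif m" using epif_sub[of q m] mle by blast
      qed
      ultimately show ?thesis by blast
    qed
  qed
  then obtain q where q: "sublin q" "\<forall>x. q x \<le> p x"
    and mx: "\<forall>X\<in>A. epif q \<subseteq> X \<longrightarrow> X = epif q" unfolding A_def by auto
  show ?thesis
  proof (intro exI conjI allI impI)
    show "sublin q" "\<And>x. q x \<le> p x" using q by auto
    fix q' assume h: "sublin q' \<and> (\<forall>x. q' x \<le> q x)"
    hence "\<forall>x. q' x \<le> p x" using q(2) by (meson order_trans)
    hence "epif q' \<in> A" using h unfolding A_def by blast
    moreover have "epif q \<subseteq> epif q'" using h epif_sub by metis
    ultimately have "epif q' = epif q" using mx by blast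
    hence "(\<forall>x. q x \<le> q' x) \<and> (\<forall>x. q' x \<le> q x)" using epif_sub[of q q'] epif_sub[of q' q] by simp
    thus "q' = q" by (intro ext antisym) auto
  qed
qed

lemma HB_point:
  fixes p :: "'v::real_vector \<Rightarrow> real"
  assumes sp: "sublin p"
  shows "\<exists>F. linear F \<and> (\<forall>x. F x \<le> p x) \<and> F z = p z"
proof -
  obtain q where q: "sublin q" "\<forall>x. q x \<le> rz p z x"
    and mn: "\<forall>q'. sublin q' \<and> (\<forall>x. q' x \<le> q x) \<longrightarrow> q' = q"
    using minimal_sublin[OF rz_sublin[OF sp, of z]] by blast
  have odd: "q (- w) = - q w" for w
  proof -
    have "rz q w = q" using mn rz_sublin[OF q(1), of w] rz_le[OF q(1), of w] by blast
    hence "q (- w) \<le> - q w" using rz_negz[OF q(1), of w] by simp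
    thus ?thesis using sublin_neg[OF q(1), of w] by simp
  qed
  have lin: "linear q"
  proof (rule linearI)
    fix x y
    have "q (x + y) \<le> q x + q y" using q(1) unfolding sublin_def by blast
    moreover have "q (- x + - y) \<le> q (- x) + q (- y)" using q(1) unfolding sublin_def by blast
    ultimately show "q (x + y) = q x + q y" using odd[of "x + y"] odd[of x] odd[of y] by (simp add: add.commute)
  next
    fix c :: real and x
    show "q (c *\<^sub>R x) = c *\<^sub>R q x"
    proof (cases "c \<ge> 0")
      case True thus ?thesis using q(1) unfolding sublin_def by simp
    next
      case False
      have "q (c *\<^sub>R x) = q ((- c) *\<^sub>R (- x))" by simp
      also have "\<dots> = (- c) * q (- x)" using q(1) False unfolding sublin_def by (metis neg_0_le_iff_le nle_le)
      finally show ?thesis using odd[of x] by simp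
    qed
  qed
  have qp: "q x \<le> p x" for x using q(2)[rule_format, of x] rz_le[OF sp, of z x] by linarith
  have "q (- z) \<le> - p z" using q(2)[rule_format, of "-z"] rz_negz[OF sp, of z] by linarith
  hence "p z \<le> q z" using odd by simp
  thus ?thesis using lin qp[of z] qp by (intro exI[of _ q]) auto
qed


lemmas linF = linear_diff linear_add linear_scale linear_neg linear_0

definition mk :: "'v::real_vector set \<Rightarrow> 'v \<Rightarrow> real" where
  "mk K v = Inf {t. t > 0 \<and> inverse t *\<^sub>R v \<in> K}"

lemma mk_props:
  fixes K :: "'v::real_vector set"
  assumes cK: "convex K" and K0: "0 \<in> K" and abs: "\<forall>v. \<exists>t>0. t *\<^sub>R v \<in> K"
  shows "sublin (mk K)" and "\<And>v. v \<in> K \<Longrightarrow> mk K v \<le> 1"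
    and "\<And>v. v \<notin> K \<Longrightarrow> 1 \<le> mk K v"
proof -
  define T where "T v = {t. t > 0 \<and> inverse t *\<^sub>R v \<in> K}" for v
  have mkT: "mk K v = Inf (T v)" for v unfolding mk_def T_def by simp
  have Tne: "T v \<noteq> {}" for v
  proof -
    obtain s where s: "s > 0" "s *\<^sub>R v \<in> K" using abs by blast
    hence "inverse s \<in> T v" unfolding T_def by simp
    thus ?thesis by blast
  qed
  have Tbdd: "bdd_below (T v)" for v unfolding T_def bdd_below_def by (rule exI[of _ 0]) auto
  have up: "t' \<in> T v" if "t \<in> T v" "t \<le> t'" for t t' v
  proof -
    have t: "t > 0" "inverse t *\<^sub>R v \<in> K" using that unfolding T_def by auto
    have "(t / t') *\<^sub>R (inverse t *\<^sub>R v) + (1 - t / t') *\<^sub>R 0 \<in> K"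
    proof -
      have "0 \<le> t / t'" "0 \<le> 1 - t / t'" "t / t' + (1 - t / t') = 1"
        using t that(2) by auto
      thus ?thesis using cK t(2) K0 unfolding convex_def by blast
    qed
    moreover have "(t / t') *\<^sub>R (inverse t *\<^sub>R v) = inverse t' *\<^sub>R v"
    proof -
      have "(t / t') * inverse t = inverse t'" using t by (simp add: field_simps)
      thus ?thesis by (simp only: scaleR_scaleR)
    qed
    ultimately have "inverse t' *\<^sub>R v \<in> K" by (simp only: scaleR_zero_right add_0_right)
    moreover have "t' > 0" using t that by simp
    ultimately show ?thesis unfolding T_def by blast
  qed
  have lower: "mk K v \<le> t" if "t \<in> T v" for t v unfolding mkT by (rule cInf_lower[OF that Tbdd])
  have greatest: "c \<le> mk K v" if "\<And>t. t \<in> T v \<Longrightarrow> c \<le> t" for c v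
    unfolding mkT by (rule cInf_greatest[OF Tne that])
  have add: "t + s \<in> T (v + w)" if "t \<in> T v" "s \<in> T w" for t s v w
  proof -
    have t: "t > 0" "inverse t *\<^sub>R v \<in> K" "s > 0" "inverse s *\<^sub>R w \<in> K" using that unfolding T_def by auto
    have "(t / (t + s)) *\<^sub>R (inverse t *\<^sub>R v) + (s / (t + s)) *\<^sub>R (inverse s *\<^sub>R w) \<in> K"
    proof -
      have "0 \<le> t / (t + s)" "0 \<le> s / (t + s)" "t / (t + s) + s / (t + s) = 1"
        using t by (auto simp: add_divide_distrib[symmetric])
      thus ?thesis using cK t(2,4) unfolding convex_def by blast
    qed
    moreover have "(t / (t + s)) *\<^sub>R (inverse t *\<^sub>R v) + (s / (t + s)) *\<^sub>R (inverse s *\<^sub>R w)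
       = inverse (t + s) *\<^sub>R (v + w)" using t by (simp add: field_simps scaleR_add_right)
    ultimately show ?thesis using t unfolding T_def by simp
  qed
  have scal: "a * t \<in> T (a *\<^sub>R v) \<longleftrightarrow> t \<in> T v" if a: "a > 0" for a t v
  proof -
    have "inverse (a * t) *\<^sub>R (a *\<^sub>R v) = inverse t *\<^sub>R v"
    proof -
      have "inverse (a * t) * a = inverse t" using a by (simp add: field_simps)
      thus ?thesis by (simp only: scaleR_scaleR)
    qed
    moreover have "0 < a * t \<longleftrightarrow> 0 < t" using a by (simp add: zero_less_mult_iff)
    ultimately show ?thesis by (simp only: T_def mem_Collect_eq)
  qed
  show "sublin (mk K)"
    unfolding sublin_def
  proof safe
    fix v w
    have "mk K (v + w) - s \<le> mk K v" if "s \<in> T w" for s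
    proof (rule greatest)
      fix t assume "t \<in> T v"
      hence "mk K (v + w) \<le> t + s" using lower add that by blast
      thus "mk K (v + w) - s \<le> t" by linarith
    qed
    hence "mk K (v + w) - mk K v \<le> mk K w"
    proof (intro greatest)
      fix t assume "t \<in> T w"
      hence "mk K (v + w) - t \<le> mk K v" using \<open>\<And>s. s \<in> T w \<Longrightarrow> mk K (v + w) - s \<le> mk K v\<close> by blast
      thus "mk K (v + w) - mk K v \<le> t" by linarith
    qed
    thus "mk K (v + w) \<le> mk K v + mk K w" by simp
  next
    fix a :: real and v assume a: "0 \<le> a"
    show "mk K (a *\<^sub>R v) = a * mk K v"
    proof (cases "a = 0")
      case True
      have "T 0 = {0<..}" unfolding T_def using K0 by auto
      thus ?thesis using True mkT by simp
    next
      case False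
      hence ap: "a > 0" using a by simp
      have "mk K (a *\<^sub>R v) / a \<le> mk K v"
      proof (rule greatest)
        fix t assume "t \<in> T v"
        hence "a * t \<in> T (a *\<^sub>R v)" using scal[OF ap] by simp
        thus "mk K (a *\<^sub>R v) / a \<le> t" using lower ap by (simp add: divide_simps mult.commute)
      qed
      moreover have "a * mk K v \<le> mk K (a *\<^sub>R v)"
      proof (rule greatest)
        fix t assume t: "t \<in> T (a *\<^sub>R v)"
        have "a * (t / a) \<in> T (a *\<^sub>R v)" using t ap by simp
        hence "t / a \<in> T v" using scal[OF ap] by blast
        hence "mk K v \<le> t / a" by (rule lower)
        thus "a * mk K v \<le> t" using ap by (simp add: divide_simps mult.commute)
      qed
      ultimately show ?thesis using ap by (simp add: divide_simps mult.commute)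
    qed
  qed
  show "mk K v \<le> 1" if "v \<in> K" for v using lower[of 1 v] that unfolding T_def by simp
  show "1 \<le> mk K v" if "v \<notin> K" for v
  proof (rule greatest)
    fix t assume t: "t \<in> T v"
    show "1 \<le> t"
    proof (rule ccontr)
      assume "\<not> 1 \<le> t"
      hence "1 \<in> T v" using up[OF t] by simp
      thus False using that unfolding T_def by simp
    qed
  qed
qed

lemma sep_alg:
  fixes Op C N :: "'v::real_vector set"
  assumes cO: "convex Op" and cC: "convex C" and dis: "Op \<inter> C = {}" and c0: "c0 \<in> C"
    and cN: "convex N" and N0: "0 \<in> N" and absN: "\<forall>v. \<exists>t>0. t *\<^sub>R v \<in> N"
    and NO: "\<forall>v\<in>N. x0 + v \<in> Op"
  shows "\<exists>F::'v\<Rightarrow>real. linear F \<and> (\<forall>v\<in>N. F v \<le> 1) \<and> (\<exists>\<delta>>0. \<forall>c\<in>C. F x0 + \<delta> \<le> F c)"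
proof -
  define z0 where "z0 = x0 - c0"
  define K where "K = {v. \<exists>u1 c. u1 \<in> Op \<and> c \<in> C \<and> v = u1 - c - z0}"
  have cK: "convex K"
    unfolding convex_def
  proof safe
    fix u w :: 'v and a b :: real
    assume "u \<in> K" "w \<in> K" and ab: "0 \<le> a" "0 \<le> b" "a + b = 1"
    then obtain o1 c1 o2 c2 where h: "o1 \<in> Op" "c1 \<in> C" "o2 \<in> Op" "c2 \<in> C"
      "u = o1 - c1 - z0" "w = o2 - c2 - z0" unfolding K_def by blast
    have "a *\<^sub>R o1 + b *\<^sub>R o2 \<in> Op" "a *\<^sub>R c1 + b *\<^sub>R c2 \<in> C"
      using cO cC h ab unfolding convex_def by blast+
    moreover have "a *\<^sub>R u + b *\<^sub>R w = (a *\<^sub>R o1 + b *\<^sub>R o2) - (a *\<^sub>R c1 + b *\<^sub>R c2) - z0"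
    proof -
      have "a *\<^sub>R z0 + b *\<^sub>R z0 = z0" using ab(3) by (metis scaleR_add_left scaleR_one)
      moreover have "a *\<^sub>R u + b *\<^sub>R w = (a *\<^sub>R o1 + b *\<^sub>R o2) - (a *\<^sub>R c1 + b *\<^sub>R c2) - (a *\<^sub>R z0 + b *\<^sub>R z0)"
        unfolding h(5,6) by (simp add: algebra_simps)
      ultimately show ?thesis by simp
    qed
    ultimately show "a *\<^sub>R u + b *\<^sub>R w \<in> K" unfolding K_def by blast
  qed
  have NK: "N \<subseteq> K"
  proof
    fix v assume "v \<in> N"
    hence "x0 + v \<in> Op" using NO by blast
    moreover have "v = (x0 + v) - c0 - z0" unfolding z0_def by simp
    ultimately show "v \<in> K" using c0 unfolding K_def by blast
  qed
  have K0: "0 \<in> K" using NK N0 by blast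
  have absK: "\<forall>v. \<exists>t>0. t *\<^sub>R v \<in> K" using absN NK by blast
  have nz: "- z0 \<notin> K"
  proof
    assume "- z0 \<in> K"
    then obtain u1 c where "u1 \<in> Op" "c \<in> C" "- z0 = u1 - c - z0" unfolding K_def by blast
    thus False using dis by auto
  qed
  note mp = mk_props[OF cK K0 absK]
  obtain F where F: "linear F" "\<forall>x. F x \<le> mk K x" "F (- z0) = mk K (- z0)"
    using HB_point[OF mp(1)] by blast
  have F1: "1 \<le> F (- z0)" using F(3) mp(3)[OF nz] by simp
  have FN: "\<forall>v\<in>N. F v \<le> 1"
  proof
    fix v assume "v \<in> N" hence "v \<in> K" using NK by blast
    thus "F v \<le> 1" using F(2) mp(2)[of v] by (meson order_trans)
  qed
  obtain s where s: "s > 0" "s *\<^sub>R (- z0) \<in> N" using absN by blast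
  have "F x0 + s \<le> F c" if c: "c \<in> C" for c
  proof -
    define u1 where "u1 = x0 + s *\<^sub>R (- z0)"
    have o: "u1 \<in> Op" using NO s unfolding u1_def by blast
    hence "u1 - c - z0 \<in> K" using c unfolding K_def by blast
    hence "F (u1 - c - z0) \<le> 1" using F(2) mp(2)[of "u1 - c - z0"] by (meson order_trans)
    hence "F u1 - F c - F z0 \<le> 1" using F(1) by (simp add: linF)
    moreover have "F u1 = F x0 + s * F (- z0)" unfolding u1_def using F(1) by (simp add: linF)
    moreover have "F z0 = - F (- z0)" using F(1) by (simp add: linF)
    moreover have "s \<le> s * F (- z0)" using F1 s(1) by simp
    ultimately show ?thesis using F1 by linarith
  qed
  hence "\<forall>c\<in>C. F x0 + s \<le> F c" by blast
  hence "\<exists>\<delta>>0. \<forall>c\<in>C. F x0 + \<delta> \<le> F c" using s(1) by blast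
  thus ?thesis using F(1) FN by blast
qed


lemma cont_vimage_open: "continuous_on UNIV f \<Longrightarrow> open U \<Longrightarrow> open (f -` U)"
  using continuous_on_open_vimage[of UNIV f] by simp

context
  fixes ty :: "'x::{real_vector,topological_space} itself"
  assumes tvs: "tvs TYPE('x)"
begin

lemma tvs_scale_cont: "continuous_on UNIV (\<lambda>u::'x. c *\<^sub>R u)"
proof -
  have "continuous_on UNIV (\<lambda>p::real \<times> 'x. fst p *\<^sub>R snd p)" using tvs unfolding tvs_def by blast
  moreover have "continuous_on UNIV (\<lambda>u::'x. (c, u))" by (intro continuous_intros)
  ultimately show ?thesis using continuous_on_compose2[of UNIV "\<lambda>p::real \<times> 'x. fst p *\<^sub>R snd p" UNIV "\<lambda>u. (c, u)"] by simp
qed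

lemma tvs_line_cont: "continuous_on UNIV (\<lambda>s::real. s *\<^sub>R (v::'x))"
proof -
  have "continuous_on UNIV (\<lambda>p::real \<times> 'x. fst p *\<^sub>R snd p)" using tvs unfolding tvs_def by blast
  moreover have "continuous_on UNIV (\<lambda>s::real. (s, v))" by (intro continuous_intros)
  ultimately show ?thesis using continuous_on_compose2[of UNIV "\<lambda>p::real \<times> 'x. fst p *\<^sub>R snd p" UNIV "\<lambda>s. (s, v)"] by simp
qed

lemma tvs_add_cont: "continuous_on UNIV (\<lambda>u::'x. a + u)"
proof -
  have "continuous_on UNIV (\<lambda>p::'x \<times> 'x. fst p + snd p)" using tvs unfolding tvs_def by blast
  moreover have "continuous_on UNIV (\<lambda>u::'x. (a, u))" by (intro continuous_intros)
  ultimately show ?thesis using continuous_on_compose2[of UNIV "\<lambda>p::'x \<times> 'x. fst p + snd p" UNIV "\<lambda>u. (a, u)"] by simp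
qed

lemma tvs_open_translate: "open (U::'x set) \<Longrightarrow> open ((+) a ` U)"
proof -
  assume U: "open U"
  have e: "(+) a ` U = (\<lambda>u. - a + u) -` U" by (force simp: algebra_simps)
  have "open ((\<lambda>u. - a + u) -` U)" by (rule cont_vimage_open[OF tvs_add_cont U])
  thus ?thesis by (simp only: e)
qed

lemma tvs_open_scale: "open (U::'x set) \<Longrightarrow> c \<noteq> 0 \<Longrightarrow> open ((\<lambda>u. c *\<^sub>R u) ` U)"
proof -
  assume U: "open U" and c: "c \<noteq> 0"
  have "(\<lambda>u. c *\<^sub>R u) ` U = (\<lambda>u. inverse c *\<^sub>R u) -` U"
  proof (rule set_eqI, rule iffI)
    fix u assume "u \<in> (\<lambda>u. c *\<^sub>R u) ` U"
    then obtain w where "w \<in> U" "u = c *\<^sub>R w" by blast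
    thus "u \<in> (\<lambda>u. inverse c *\<^sub>R u) -` U" using c by simp
  next
    fix u assume "u \<in> (\<lambda>u. inverse c *\<^sub>R u) -` U"
    hence "inverse c *\<^sub>R u \<in> U" by simp
    moreover have "u = c *\<^sub>R (inverse c *\<^sub>R u)" using c by simp
    ultimately show "u \<in> (\<lambda>u. c *\<^sub>R u) ` U" by blast
  qed
  thus ?thesis using cont_vimage_open[OF tvs_scale_cont U] by simp
qed

lemma tvs_absorb: "open (U::'x set) \<Longrightarrow> 0 \<in> U \<Longrightarrow> \<exists>t>0. t *\<^sub>R v \<in> U"
proof -
  assume U: "open U" "0 \<in> U"
  have "open ((\<lambda>s::real. s *\<^sub>R v) -` U)" using cont_vimage_open[OF tvs_line_cont U(1)] .
  moreover have "0 \<in> (\<lambda>s::real. s *\<^sub>R v) -` U" using U(2) by simp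
  ultimately obtain e where e: "e > 0" "\<forall>s. dist s 0 < e \<longrightarrow> s *\<^sub>R v \<in> U"
    unfolding open_dist by blast
  thus ?thesis by (intro exI[of _ "e/2"]) auto
qed

lemma tvs_absorb_convex:
  assumes "open (U::'x set)" "0 \<in> U" "convex U"
  shows "\<exists>t>0. \<forall>s. 0 \<le> s \<and> s \<le> t \<longrightarrow> s *\<^sub>R v \<in> U"
proof -
  obtain t where t: "t > 0" "t *\<^sub>R v \<in> U" using tvs_absorb assms by blast
  have "s *\<^sub>R v \<in> U" if "0 \<le> s" "s \<le> t" for s
  proof -
    have "0 \<le> s / t" "0 \<le> 1 - s / t" "s / t + (1 - s / t) = 1" using t that by auto
    hence "(s / t) *\<^sub>R (t *\<^sub>R v) + (1 - s / t) *\<^sub>R 0 \<in> U"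
      using assms(2,3) t unfolding convex_def by blast
    thus ?thesis using t by simp
  qed
  thus ?thesis using t by blast
qed

lemma tvs_linear_cont:
  fixes \<phi> :: "'x \<Rightarrow> real"
  assumes lin: "linear \<phi>" and W: "open W" "0 \<in> W" and b: "\<forall>w\<in>W. \<bar>\<phi> w\<bar> \<le> 1"
  shows "continuous_on UNIV \<phi>"
proof -
  have "open (\<phi> -` S)" if S: "open S" for S
    unfolding open_subopen[of "\<phi> -` S"]
  proof
    fix x assume x: "x \<in> \<phi> -` S"
    then obtain e where e: "e > 0" "\<forall>y. dist y (\<phi> x) < e \<longrightarrow> y \<in> S"
      using S unfolding open_dist by auto
    define T where "T = (+) x ` ((\<lambda>u. (e/2) *\<^sub>R u) ` W)"
    have "open T" unfolding T_def using tvs_open_translate tvs_open_scale W e by simp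
    moreover have "x \<in> T" unfolding T_def using W(2) by force
    moreover have "T \<subseteq> \<phi> -` S"
    proof
      fix y assume "y \<in> T"
      then obtain w where w: "w \<in> W" "y = x + (e/2) *\<^sub>R w" unfolding T_def by blast
      hence "\<phi> y = \<phi> x + (e/2) * \<phi> w" using lin by (simp add: linF)
      moreover have "\<bar>(e/2) * \<phi> w\<bar> \<le> e/2" using b w e by (simp add: abs_mult)
      ultimately have "dist (\<phi> y) (\<phi> x) < e" using e by (simp add: dist_real_def)
      thus "y \<in> \<phi> -` S" using e by simp
    qed
    ultimately show "\<exists>T. open T \<and> x \<in> T \<and> T \<subseteq> \<phi> -` S" by blast
  qed
  thus ?thesis using continuous_on_open_vimage[of UNIV \<phi>] by simp
qed

lemma sep_top:
  assumes lc: "locally_convex TYPE('x)"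
    and cC: "convex (C :: ('x \<times> real) set)" and clC: "closed C" and c0: "c0 \<in> C"
    and nC: "(x0, r0) \<notin> C"
  shows "\<exists>(\<phi>::'x\<Rightarrow>real) a \<delta>. linear \<phi> \<and> continuous_on UNIV \<phi> \<and> \<delta> > 0 \<and>
           (\<forall>Z m. (Z, m) \<in> C \<longrightarrow> \<phi> x0 + a * r0 + \<delta> \<le> \<phi> Z + a * m)"
proof -
  have "open (- C)" using clC by (simp add: closed_def)
  then obtain A B where AB: "open A" "open B" "(x0, r0) \<in> A \<times> B" "A \<times> B \<subseteq> - C"
    using nC by (metis ComplI open_prod_elim)
  define A' where "A' = (+) (- x0) ` A"
  have A': "open A'" "0 \<in> A'"
  proof -
    show "open A'" unfolding A'_def using tvs_open_translate AB(1) by blast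
    have "x0 \<in> A" using AB(3) by simp
    hence "- x0 + x0 \<in> (+) (- x0) ` A" by blast
    thus "0 \<in> A'" unfolding A'_def by simp
  qed
  obtain V where V: "open V" "convex V" "0 \<in> V" "V \<subseteq> A'" using lc A' unfolding locally_convex_def by blast
  define W where "W = V \<inter> (\<lambda>u. (-1::real) *\<^sub>R u) ` V"
  have W: "open W" "convex W" "0 \<in> W" "W \<subseteq> A'"
  proof -
    show "open W" unfolding W_def using tvs_open_scale[OF V(1), of "-1"] V(1) by auto
    have "(\<lambda>u. (-1::real) *\<^sub>R u) ` V = (\<lambda>u. - u) ` V" by simp
    thus "convex W" unfolding W_def using convex_negations[OF V(2)] V(2) by (simp add: convex_Int)
    show "0 \<in> W" unfolding W_def using V(3) by force
    show "W \<subseteq> A'" unfolding W_def using V(4) by blast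
  qed
  have Wsym: "- w \<in> W" if "w \<in> W" for w
  proof -
    have "w \<in> V" "- w \<in> V" using that unfolding W_def by auto
    thus ?thesis unfolding W_def by force
  qed
  obtain e where e: "e > 0" "\<forall>y. dist y r0 < e \<longrightarrow> y \<in> B" using AB(2,3) unfolding open_dist by auto
  define N where "N = W \<times> {m::real. \<bar>m\<bar> < e}"
  have cN: "convex N" unfolding N_def
  proof (rule convex_Times[OF W(2)])
    have "{m::real. \<bar>m\<bar> < e} = ball 0 e" by (auto simp: dist_real_def)
    thus "convex {m::real. \<bar>m\<bar> < e}" by simp
  qed
  have N0: "0 \<in> N" unfolding N_def using W(3) e by (simp add: zero_prod_def)
  have absN: "\<forall>v. \<exists>t>0. t *\<^sub>R v \<in> N"
  proof
    fix v :: "'x \<times> real"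
    obtain t1 where t1: "t1 > 0" "\<forall>s. 0 \<le> s \<and> s \<le> t1 \<longrightarrow> s *\<^sub>R fst v \<in> W"
      using tvs_absorb_convex[OF W(1,3,2)] by blast
    define t where "t = min t1 (e / (2 * (\<bar>snd v\<bar> + 1)))"
    have tp: "t > 0" using t1 e unfolding t_def by (simp add: abs_add_one_gt_zero)
    have "t *\<^sub>R fst v \<in> W" using t1 tp unfolding t_def by simp
    moreover have "\<bar>t * snd v\<bar> < e"
    proof -
      have "\<bar>t * snd v\<bar> = t * \<bar>snd v\<bar>" using tp by (simp add: abs_mult)
      also have "\<dots> \<le> (e / (2 * (\<bar>snd v\<bar> + 1))) * \<bar>snd v\<bar>"
        by (rule mult_right_mono) (auto simp: t_def)
      also have "\<dots> < e"
      proof -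
        have "(e / (2 * (\<bar>snd v\<bar> + 1))) * \<bar>snd v\<bar> = e * (\<bar>snd v\<bar> / (2 * (\<bar>snd v\<bar> + 1)))" by simp
        moreover have "\<bar>snd v\<bar> / (2 * (\<bar>snd v\<bar> + 1)) < 1"
          by (simp add: divide_simps)
        moreover have "e * (\<bar>snd v\<bar> / (2 * (\<bar>snd v\<bar> + 1))) < e * 1"
          by (rule mult_strict_left_mono[OF calculation(2) e(1)])
        ultimately show ?thesis by simp
      qed
      finally show ?thesis .
    qed
    ultimately have "t *\<^sub>R v \<in> N" unfolding N_def by (cases v) simp
    thus "\<exists>t>0. t *\<^sub>R v \<in> N" using tp by blast
  qed
  define Op where "Op = (+) (x0, r0) ` N"
  have cO: "convex Op" unfolding Op_def by (rule convex_translation[OF cN])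
  have NO: "\<forall>v\<in>N. (x0, r0) + v \<in> Op" unfolding Op_def by blast
  have dis: "Op \<inter> C = {}"
  proof -
    have "Op \<subseteq> A \<times> B"
    proof
      fix p assume "p \<in> Op"
      then obtain w m where wm: "w \<in> W" "\<bar>m\<bar> < e" "p = (x0 + w, r0 + m)" unfolding Op_def N_def by auto
      have "w \<in> A'" using W(4) wm by blast
      hence "x0 + w \<in> A" unfolding A'_def by auto
      moreover have "r0 + m \<in> B" using e wm by (simp add: dist_real_def)
      ultimately show "p \<in> A \<times> B" using wm by simp
    qed
    thus ?thesis using AB(4) by blast
  qed
  obtain F :: "'x \<times> real \<Rightarrow> real" and \<delta> where F: "linear F" "\<forall>v\<in>N. F v \<le> 1" "\<delta> > 0"
    "\<forall>c\<in>C. F (x0, r0) + \<delta> \<le> F c"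
    using sep_alg[OF cO cC dis c0 cN N0 absN NO] by blast
  define \<phi> where "\<phi> Z = F (Z, 0)" for Z
  define a where "a = F (0, 1)"
  have Fdec: "F (Z, m) = \<phi> Z + a * m" for Z m
  proof -
    have "(Z, m) = (Z, 0) + m *\<^sub>R (0, 1)" by simp
    hence "F (Z, m) = F ((Z, 0) + m *\<^sub>R (0, 1))" by simp
    also have "\<dots> = F (Z, 0) + m * F (0, 1)" using F(1) by (simp only: linF real_scaleR_def)
    finally have "F (Z, m) = F (Z, 0) + m * F (0, 1)" .
    thus ?thesis unfolding \<phi>_def a_def by simp
  qed
  have lin: "linear \<phi>"
  proof (rule linearI)
    fix x y :: 'x
    have "(x + y, 0::real) = (x, 0) + (y, 0)" by simp
    thus "\<phi> (x + y) = \<phi> x + \<phi> y" unfolding \<phi>_def using F(1) by (simp only: linF)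
  next
    fix c :: real and x :: 'x
    have "(c *\<^sub>R x, 0::real) = c *\<^sub>R (x, 0)" by simp
    thus "\<phi> (c *\<^sub>R x) = c *\<^sub>R \<phi> x" unfolding \<phi>_def using F(1) by (simp only: linF real_scaleR_def)
  qed
  have b: "\<forall>w\<in>W. \<bar>\<phi> w\<bar> \<le> 1"
  proof
    fix w assume w: "w \<in> W"
    have "(w, 0) \<in> N" "(- w, 0) \<in> N" using w Wsym e unfolding N_def by auto
    hence "\<phi> w \<le> 1" "\<phi> (- w) \<le> 1" using F(2) unfolding \<phi>_def by auto
    moreover have "\<phi> (- w) = - \<phi> w" using lin by (simp add: linF)
    ultimately show "\<bar>\<phi> w\<bar> \<le> 1" by linarith
  qed
  have "continuous_on UNIV \<phi>" by (rule tvs_linear_cont[OF lin W(1,3) b])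
  moreover have "\<forall>Z m. (Z, m) \<in> C \<longrightarrow> \<phi> x0 + a * r0 + \<delta> \<le> \<phi> Z + a * m"
  proof (intro allI impI)
    fix Z m assume "(Z, m) \<in> C"
    hence "F (x0, r0) + \<delta> \<le> F (Z, m)" using F(4) by blast
    thus "\<phi> x0 + a * r0 + \<delta> \<le> \<phi> Z + a * m" unfolding Fdec .
  qed
  ultimately show ?thesis using lin F(3) by (intro exI[of _ \<phi>] exI[of _ a] exI[of _ \<delta>]) simp
qed

end

lemma topdual_comb:
  assumes "\<psi> \<in> topdual TYPE('x::{real_vector,topological_space})" "\<phi> \<in> topdual TYPE('x)"
  shows "(\<lambda>X. a * \<psi> X + b * \<phi> X) \<in> topdual TYPE('x)"
proof -
  have l: "linear \<psi>" "linear \<phi>" and c: "continuous_on UNIV \<psi>" "continuous_on UNIV \<phi>"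
    using assms unfolding topdual_def by auto
  have "linear (\<lambda>X. a * \<psi> X + b * \<phi> X)"
    by (rule linearI) (use l in \<open>simp_all add: linF algebra_simps\<close>)
  moreover have "continuous_on UNIV (\<lambda>X. a * \<psi> X + b * \<phi> X)"
    by (intro continuous_intros c)
  ultimately show ?thesis unfolding topdual_def by simp
qed

lemma topdual_scale:
  assumes "\<psi> \<in> topdual TYPE('x::{real_vector,topological_space})"
  shows "(\<lambda>X. a * \<psi> X) \<in> topdual TYPE('x)"
  using topdual_comb[OF assms assms, of a 0] by simp

lemma nonneg_on_cone:
  assumes lin: "linear \<psi>" and cone: "convex_cone A" and s: "sigmaA A \<psi> > -\<infinity>" and W: "W \<in> A"
  shows "\<psi> W \<ge> 0"
proof (rule ccontr)
  assume neg: "\<not> \<psi> W \<ge> 0"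
  obtain b where b: "sigmaA A \<psi> = ereal b \<or> sigmaA A \<psi> = \<infinity>" using s by (cases "sigmaA A \<psi>") auto
  define t where "t = (\<bar>b\<bar> + 1) / (- \<psi> W)"
  have t: "t > 0" using neg unfolding t_def by (simp add: divide_simps)
  have "t *\<^sub>R W \<in> A" using cone W t unfolding convex_cone_def by (simp add: conic_mul)
  hence "sigmaA A \<psi> \<le> ereal (\<psi> (t *\<^sub>R W))" unfolding sigmaA_def by (intro INF_lower) auto
  moreover have "\<psi> (t *\<^sub>R W) = - (\<bar>b\<bar> + 1)" using lin neg unfolding t_def by (simp add: linF)
  ultimately show False using b by auto
qed

context
  fixes Xp :: "'x::{real_vector,topological_space} set"
    and P :: "(real^'n) set"
    and V0 :: "real^'n \<Rightarrow> real"
    and V1 :: "real^'n \<Rightarrow> 'x"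
    and A :: "'x set"
  assumes tvs: "tvs TYPE('x)"
    and P0: "0 \<in> P"
    and V00: "V0 0 = 0"
    and V10: "V1 0 = 0"
    and A0: "0 \<in> A"
    and lc: "locally_convex TYPE('x)"
    and proper: "proper_fun (rho P V0 V1 A)"
    and cvx: "convex_efun (rho P V0 V1 A)"
    and lsc_rho: "lsc (rho P V0 V1 A)"
    and Acone: "convex_cone A"
begin

abbreviation "R \<equiv> rho P V0 V1 A"

lemma R_le: "x \<in> P \<Longrightarrow> X + V1 x \<in> A \<Longrightarrow> R X \<le> ereal (V0 x)"
  unfolding rho_def by (rule INF_lower) auto

lemma R_ge: "(\<And>x. x \<in> P \<Longrightarrow> X + V1 x \<in> A \<Longrightarrow> c \<le> ereal (V0 x)) \<Longrightarrow> c \<le> R X"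
  unfolding rho_def by (rule INF_greatest) auto

lemma R_0: "R 0 \<le> 0"
  using R_le[OF P0, of 0] V10 V00 A0 by (simp add: zero_ereal_def)

lemma epi_closed: "closed {(X, m::real). R X \<le> ereal m}"
proof -
  have "open (- {(X, m::real). R X \<le> ereal m})"
    unfolding open_subopen[of "- {(X, m::real). R X \<le> ereal m}"]
  proof
    fix p assume "p \<in> - {(X, m::real). R X \<le> ereal m}"
    then obtain X m where p: "p = (X, m)" "ereal m < R X" by (cases p) auto
    obtain c where c: "m < c" "ereal c < R X"
    proof (cases "R X")
      case (real r) thus ?thesis using that[of "(m + r)/2"] p by auto
    next
      case PInf thus ?thesis using that[of "m + 1"] by auto
    next
      case MInf thus ?thesis using p by auto
    qed
    obtain U where U: "open U" "X \<in> U" "\<forall>y\<in>U. ereal c < R y"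
      using lsc_rho c(2) unfolding lsc_def by blast
    have "open (U \<times> {..<c})" using U(1) by (intro open_Times) auto
    moreover have "p \<in> U \<times> {..<c}" using p U c by auto
    moreover have "U \<times> {..<c} \<subseteq> - {(X, m::real). R X \<le> ereal m}"
    proof
      fix q assume "q \<in> U \<times> {..<c}"
      then obtain Y n where q: "q = (Y, n)" "Y \<in> U" "n < c" by auto
      hence "ereal n < ereal c" "ereal c < R Y" using U(3) by auto
      hence "ereal n < R Y" by (rule order.strict_trans)
      thus "q \<in> - {(X, m::real). R X \<le> ereal m}" using q by auto
    qed
    ultimately show "\<exists>T. open T \<and> p \<in> T \<and> T \<subseteq> - {(X, m::real). R X \<le> ereal m}" by blast
  qed
  thus ?thesis by (simp add: closed_def)
qed

lemma epi_convex: "convex {(X, m::real). R X \<le> ereal m}"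
  using cvx unfolding convex_efun_def .

lemma R_finite_pt: "\<exists>Z1 m1. R Z1 = ereal m1"
proof -
  obtain Z1 where "R Z1 \<noteq> \<infinity>" "R Z1 \<noteq> -\<infinity>" using proper unfolding proper_fun_def by blast
  thus ?thesis by (cases "R Z1") auto
qed

lemma R_nonminf: "R X \<noteq> -\<infinity>" using proper unfolding proper_fun_def by blast

lemma minorant_D:
  assumes psi: "\<psi> \<in> topdual TYPE('x)" and mi: "\<forall>Z. ereal (c - \<psi> Z) \<le> R Z"
  shows "\<psi> \<in> DD P V0 V1 A" and "ereal c \<le> sigmaPV P V0 V1 \<psi>"
proof -
  have lin: "linear \<psi>" using psi unfolding topdual_def by auto
  have key: "c - \<psi> W + \<psi> (V1 x) \<le> V0 x" if "W \<in> A" "x \<in> P" for W x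
  proof -
    have "R (W - V1 x) \<le> ereal (V0 x)" using R_le[OF that(2), of "W - V1 x"] that(1) by simp
    hence "ereal (c - \<psi> (W - V1 x)) \<le> ereal (V0 x)" using mi order_trans by blast
    thus ?thesis using lin by (simp add: linF)
  qed
  have pos: "\<psi> W \<ge> 0" if W: "W \<in> A" for W
  proof (rule ccontr)
    assume neg: "\<not> \<psi> W \<ge> 0"
    define t where "t = (\<bar>c\<bar> + 1) / (- \<psi> W)"
    have t: "t > 0" using neg unfolding t_def by (simp add: divide_simps)
    have "t *\<^sub>R W \<in> A" using Acone W t unfolding convex_cone_def by (simp add: conic_mul)
    hence "c - \<psi> (t *\<^sub>R W) + \<psi> (V1 0) \<le> V0 0" using key P0 by blast
    moreover have "\<psi> (t *\<^sub>R W) = - (\<bar>c\<bar> + 1)" using lin neg unfolding t_def by (simp add: linF)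
    ultimately show False using V00 V10 lin by (simp add: linF)
  qed
  have sA: "sigmaA A \<psi> \<ge> 0" unfolding sigmaA_def by (rule INF_greatest) (use pos in auto)
  show sP: "ereal c \<le> sigmaPV P V0 V1 \<psi>" unfolding sigmaPV_def
  proof (rule INF_greatest)
    fix x assume "x \<in> P"
    hence "c - \<psi> 0 + \<psi> (V1 x) \<le> V0 x" using key A0 by blast
    thus "ereal c \<le> ereal (V0 x - \<psi> (V1 x))" using lin by (simp add: linF)
  qed
  show "\<psi> \<in> DD P V0 V1 A" unfolding DD_def using psi sA sP
    by (auto intro: order_less_le_trans[of _ 0] order_less_le_trans[of _ "ereal c"])
qed

lemma sigmaPV_le0: "\<psi> \<in> topdual TYPE('x) \<Longrightarrow> sigmaPV P V0 V1 \<psi> \<le> 0"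
proof -
  assume "\<psi> \<in> topdual TYPE('x)"
  hence "\<psi> 0 = 0" unfolding topdual_def by (simp add: linF)
  hence "sigmaPV P V0 V1 \<psi> \<le> ereal (V0 0 - \<psi> (V1 0))" unfolding sigmaPV_def using P0 by (intro INF_lower) auto
  thus ?thesis using V00 V10 \<open>\<psi> 0 = 0\<close> by (simp add: zero_ereal_def)
qed

lemma D_real: "\<psi> \<in> DD P V0 V1 A \<Longrightarrow> \<exists>s. sigmaPV P V0 V1 \<psi> = ereal s"
proof -
  assume d: "\<psi> \<in> DD P V0 V1 A"
  hence "sigmaPV P V0 V1 \<psi> > -\<infinity>" "sigmaPV P V0 V1 \<psi> \<le> 0" using sigmaPV_le0 unfolding DD_def by auto
  thus ?thesis by (cases "sigmaPV P V0 V1 \<psi>") auto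
qed

lemma D_pos: "\<psi> \<in> DD P V0 V1 A \<Longrightarrow> W \<in> A \<Longrightarrow> \<psi> W \<ge> 0"
  using nonneg_on_cone[OF _ Acone] unfolding DD_def topdual_def by blast

lemma weak_dual:
  assumes d: "\<psi> \<in> DD P V0 V1 A"
  shows "sigmaPV P V0 V1 \<psi> - ereal (\<psi> X) \<le> R X"
proof -
  obtain s where s: "sigmaPV P V0 V1 \<psi> = ereal s" using D_real[OF d] by blast
  have lin: "linear \<psi>" using d unfolding DD_def topdual_def by auto
  have "ereal (s - \<psi> X) \<le> R X"
  proof (rule R_ge)
    fix x assume x: "x \<in> P" "X + V1 x \<in> A"
    have "s \<le> V0 x - \<psi> (V1 x)" using s x(1) unfolding sigmaPV_def
      by (metis (mono_tags, lifting) INF_lower ereal_less_eq(3) image_eqI)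
    moreover have "\<psi> (X + V1 x) \<ge> 0" by (rule D_pos[OF d x(2)])
    ultimately show "ereal (s - \<psi> X) \<le> ereal (V0 x)" using lin by (simp add: linF)
  qed
  thus ?thesis using s by simp
qed


lemma sep_epi:
  assumes "ereal r < R X0"
  shows "\<exists>(\<phi>::'x\<Rightarrow>real) a \<delta>. linear \<phi> \<and> continuous_on UNIV \<phi> \<and> \<delta> > 0 \<and>
           (\<forall>Z m. R Z \<le> ereal m \<longrightarrow> \<phi> X0 + a * r + \<delta> \<le> \<phi> Z + a * m)"
proof -
  obtain Z1 m1 where z: "R Z1 = ereal m1" using R_finite_pt by blast
  have c0: "(Z1, m1) \<in> {(X, m::real). R X \<le> ereal m}" using z by simp
  have nC: "(X0, r) \<notin> {(X, m::real). R X \<le> ereal m}" using assms by simp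
  show ?thesis using sep_top[OF tvs lc epi_convex epi_closed c0 nC] by simp
qed

lemma sep_a_nonneg:
  assumes "\<forall>Z m. R Z \<le> ereal m \<longrightarrow> \<phi> X0 + a * r + \<delta> \<le> \<phi> Z + a * m"
  shows "a \<ge> 0"
proof (rule ccontr)
  assume a: "\<not> a \<ge> 0"
  obtain Z1 m1 where z: "R Z1 = ereal m1" using R_finite_pt by blast
  define k where "k = (\<bar>\<phi> Z1 + a * m1 - \<phi> X0 - a * r - \<delta>\<bar> + 1) / (- a)"
  have k: "k \<ge> 0" using a unfolding k_def by (simp add: divide_simps)
  have "R Z1 \<le> ereal (m1 + k)" using z k by simp
  hence "\<phi> X0 + a * r + \<delta> \<le> \<phi> Z1 + a * (m1 + k)" using assms by blast
  moreover have "a * k = - (\<bar>\<phi> Z1 + a * m1 - \<phi> X0 - a * r - \<delta>\<bar> + 1)" using a unfolding k_def by simp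
  ultimately show False by (simp add: distrib_left)
qed

lemma sep_minorant:
  assumes lin: "linear \<phi>" and cont: "continuous_on UNIV \<phi>" and a: "a > 0"
    and sep: "\<forall>Z m. R Z \<le> ereal m \<longrightarrow> \<phi> X0 + a * r + \<delta> \<le> \<phi> Z + a * m"
  shows "(\<lambda>Z. inverse a * \<phi> Z) \<in> topdual TYPE('x)"
    and "\<forall>Z. ereal ((\<phi> X0 + \<delta>) / a + r - inverse a * \<phi> Z) \<le> R Z"
proof -
  show "(\<lambda>Z. inverse a * \<phi> Z) \<in> topdual TYPE('x)"
    by (rule topdual_scale) (use lin cont in \<open>simp add: topdual_def\<close>)
  show "\<forall>Z. ereal ((\<phi> X0 + \<delta>) / a + r - inverse a * \<phi> Z) \<le> R Z"
  proof
    fix Z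
    show "ereal ((\<phi> X0 + \<delta>) / a + r - inverse a * \<phi> Z) \<le> R Z"
    proof (cases "R Z")
      case (real m)
      hence "\<phi> X0 + a * r + \<delta> \<le> \<phi> Z + a * m" using sep by simp
      have e: "(\<phi> X0 + \<delta>) / a + r - inverse a * \<phi> Z = (\<phi> X0 + \<delta> + a * r - \<phi> Z) / a"
        using a by (simp add: field_simps)
      have "(\<phi> X0 + \<delta> + a * r - \<phi> Z) / a \<le> m"
        using \<open>\<phi> X0 + a * r + \<delta> \<le> \<phi> Z + a * m\<close> a by (simp add: pos_divide_le_eq algebra_simps)
      hence "(\<phi> X0 + \<delta>) / a + r - inverse a * \<phi> Z \<le> m" using e by simp
      thus ?thesis using real by simp
    next
      case PInf thus ?thesis by simp
    next
      case MInf thus ?thesis using R_nonminf by simp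
    qed
  qed
qed

lemma nonvertical: "\<exists>\<psi> c. \<psi> \<in> topdual TYPE('x) \<and> (\<forall>Z. ereal (c - \<psi> Z) \<le> R Z)"
proof -
  obtain Z1 m1 where z: "R Z1 = ereal m1" using R_finite_pt by blast
  have "ereal (m1 - 1) < R Z1" using z by simp
  then obtain \<phi> a \<delta> where s: "linear \<phi>" "continuous_on UNIV \<phi>" "\<delta> > 0"
    "\<forall>Z m. R Z \<le> ereal m \<longrightarrow> \<phi> Z1 + a * (m1 - 1) + \<delta> \<le> \<phi> Z + a * m"
    using sep_epi by blast
  have "\<phi> Z1 + a * (m1 - 1) + \<delta> \<le> \<phi> Z1 + a * m1" using s(4) z by simp
  hence "a > 0" using s(3) by (simp add: algebra_simps)
  thus ?thesis using sep_minorant[OF s(1,2) _ s(4)] by blast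
qed

lemma D_nonempty: "DD P V0 V1 A \<noteq> {}"
  using nonvertical minorant_D(1) by blast

lemma strong_dual:
  assumes r: "ereal r < R X0"
  shows "\<exists>\<psi>\<in>DD P V0 V1 A. ereal r < sigmaPV P V0 V1 \<psi> - ereal (\<psi> X0)"
proof -
  obtain \<phi> a \<delta> where s: "linear \<phi>" "continuous_on UNIV \<phi>" "\<delta> > 0"
    "\<forall>Z m. R Z \<le> ereal m \<longrightarrow> \<phi> X0 + a * r + \<delta> \<le> \<phi> Z + a * m"
    using sep_epi[OF r] by blast
  have a0: "a \<ge> 0" by (rule sep_a_nonneg[OF s(4)])
  obtain \<psi> c where pc: "\<psi> \<in> topdual TYPE('x)" "\<forall>Z. ereal (c - \<psi> Z) \<le> R Z" "c - \<psi> X0 > r"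
  proof (cases "a = 0")
    case False
    hence ap: "a > 0" using a0 by simp
    note m = sep_minorant[OF s(1,2) ap s(4)]
    have "(\<phi> X0 + \<delta>) / a + r - inverse a * \<phi> X0 > r" using ap s(3)
      by (simp add: field_simps)
    thus ?thesis using that[OF m] by blast
  next
    case True
    obtain \<psi>1 c1 where n: "\<psi>1 \<in> topdual TYPE('x)" "\<forall>Z. ereal (c1 - \<psi>1 Z) \<le> R Z"
      using nonvertical by blast
    define k where "k = (\<bar>r - (c1 - \<psi>1 X0)\<bar> + 1) / \<delta>"
    have k: "k \<ge> 0" "k * \<delta> = \<bar>r - (c1 - \<psi>1 X0)\<bar> + 1" using s(3) unfolding k_def by auto
    have pd: "(\<lambda>X. 1 * \<psi>1 X + k * \<phi> X) \<in> topdual TYPE('x)"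
      by (rule topdual_comb[OF n(1)]) (use s(1,2) in \<open>simp add: topdual_def\<close>)
    have mi: "\<forall>Z. ereal (c1 + k * (\<phi> X0 + \<delta>) - (1 * \<psi>1 Z + k * \<phi> Z)) \<le> R Z"
    proof
      fix Z show "ereal (c1 + k * (\<phi> X0 + \<delta>) - (1 * \<psi>1 Z + k * \<phi> Z)) \<le> R Z"
      proof (cases "R Z")
        case (real m)
        hence "R Z \<le> ereal m" by simp
        hence "\<phi> X0 + a * r + \<delta> \<le> \<phi> Z + a * m" using s(4) by blast
        hence "\<phi> X0 + \<delta> \<le> \<phi> Z" using True by simp
        hence "k * (\<phi> X0 + \<delta>) \<le> k * \<phi> Z" using k(1) by (simp add: mult_left_mono)
        moreover have "c1 - \<psi>1 Z \<le> m" using n(2) real by (metis ereal_less_eq(3))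
        ultimately show ?thesis using real by simp
      next
        case PInf thus ?thesis by simp
      next
        case MInf thus ?thesis using R_nonminf by simp
      qed
    qed
    have "c1 + k * (\<phi> X0 + \<delta>) - (1 * \<psi>1 X0 + k * \<phi> X0) > r"
    proof -
      have "c1 + k * (\<phi> X0 + \<delta>) - (1 * \<psi>1 X0 + k * \<phi> X0) = c1 - \<psi>1 X0 + k * \<delta>"
        by (simp add: algebra_simps)
      thus ?thesis using k(2) by linarith
    qed
    thus ?thesis using that[OF pd mi] by blast
  qed
  have "\<psi> \<in> DD P V0 V1 A" "ereal c \<le> sigmaPV P V0 V1 \<psi>" using minorant_D[OF pc(1,2)] by auto
  moreover have "ereal r < ereal c - ereal (\<psi> X0)" using pc(3) by simp
  moreover have "ereal c - ereal (\<psi> X0) \<le> sigmaPV P V0 V1 \<psi> - ereal (\<psi> X0)"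
  proof -
    obtain s where "sigmaPV P V0 V1 \<psi> = ereal s" using D_real[OF calculation(1)] by blast
    thus ?thesis using calculation(2) by simp
  qed
  ultimately show ?thesis by (meson order_less_le_trans)
qed

lemma FM_eq: "R X = (SUP \<psi>\<in>DD P V0 V1 A. sigmaPV P V0 V1 \<psi> - ereal (\<psi> X))"
proof (rule antisym)
  show "(SUP \<psi>\<in>DD P V0 V1 A. sigmaPV P V0 V1 \<psi> - ereal (\<psi> X)) \<le> R X"
    by (rule SUP_least) (rule weak_dual)
  show "R X \<le> (SUP \<psi>\<in>DD P V0 V1 A. sigmaPV P V0 V1 \<psi> - ereal (\<psi> X))"
  proof (rule ccontr)
    assume "\<not> ?thesis"
    hence "(SUP \<psi>\<in>DD P V0 V1 A. sigmaPV P V0 V1 \<psi> - ereal (\<psi> X)) < R X" by simp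
    then obtain r where r: "(SUP \<psi>\<in>DD P V0 V1 A. sigmaPV P V0 V1 \<psi> - ereal (\<psi> X)) < ereal r" "ereal r < R X"
      using ereal_dense2 by blast
    obtain \<psi> where "\<psi> \<in> DD P V0 V1 A" "ereal r < sigmaPV P V0 V1 \<psi> - ereal (\<psi> X)"
      using strong_dual[OF r(2)] by blast
    moreover have "sigmaPV P V0 V1 \<psi> - ereal (\<psi> X) \<le> (SUP \<psi>\<in>DD P V0 V1 A. sigmaPV P V0 V1 \<psi> - ereal (\<psi> X))"
      using calculation(1) by (rule SUP_upper)
    ultimately show False using r(1) by simp
  qed
qed

end

lemma cone_scale: "convex_cone K \<Longrightarrow> X \<in> K \<Longrightarrow> 0 \<le> t \<Longrightarrow> t *\<^sub>R X \<in> K"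
  unfolding convex_cone_def by (simp add: conic_mul)

lemma cone_add: "convex_cone K \<Longrightarrow> X \<in> K \<Longrightarrow> Y \<in> K \<Longrightarrow> X + Y \<in> K"
proof -
  assume K: "convex_cone K" "X \<in> K" "Y \<in> K"
  have "(1/2::real) *\<^sub>R X + (1/2::real) *\<^sub>R Y \<in> K" using K unfolding convex_cone_def convex_def by auto
  hence "2 *\<^sub>R ((1/2::real) *\<^sub>R X + (1/2::real) *\<^sub>R Y) \<in> K" using cone_scale[OF K(1)] by simp
  thus ?thesis by (simp add: scaleR_add_right)
qed

lemma asym_seq:
  fixes a :: "nat \<Rightarrow> 'a::{real_vector,topological_space}"
  assumes "\<forall>k. a k \<in> C" "\<forall>k. 0 \<le> t k" "t \<longlonglongrightarrow> 0" "(\<lambda>k. t k *\<^sub>R a k) \<longlonglongrightarrow> X"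
  shows "X \<in> asym_cone C"
  unfolding asym_cone_def
proof (intro CollectI exI[of _ "filtermap (\<lambda>k. (a k, t k)) sequentially"] conjI)
  show "filtermap (\<lambda>k. (a k, t k)) sequentially \<noteq> bot" by (simp add: filtermap_bot_iff)
  show "\<forall>\<^sub>F p in filtermap (\<lambda>k. (a k, t k)) sequentially. fst p \<in> C \<and> 0 \<le> snd p"
    using assms(1,2) by (simp add: eventually_filtermap)
  show "((\<lambda>p. snd p) \<longlongrightarrow> 0) (filtermap (\<lambda>k. (a k, t k)) sequentially)"
    using assms(3) by (simp add: filterlim_filtermap)
  show "((\<lambda>p. snd p *\<^sub>R fst p) \<longlongrightarrow> X) (filtermap (\<lambda>k. (a k, t k)) sequentially)"
    using assms(4) by (simp add: filterlim_filtermap)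
qed

context
  fixes Xp :: "'x::{real_vector,topological_space} set"
    and P :: "(real^'n) set"
    and V0 :: "real^'n \<Rightarrow> real"
    and V1 :: "real^'n \<Rightarrow> 'x"
    and A :: "'x set"
  assumes tvs: "tvs TYPE('x)"
    and P0: "0 \<in> P"
    and V00: "V0 0 = 0"
    and V10: "V1 0 = 0"
    and A0: "0 \<in> A"
    and lc: "locally_convex TYPE('x)"
    and proper: "proper_fun (rho P V0 V1 A)"
    and cvx: "convex_efun (rho P V0 V1 A)"
    and lsc_rho: "lsc (rho P V0 V1 A)"
    and Acone: "convex_cone A"
    and Xp: "convex_cone Xp"
    and AXp: "\<forall>X\<in>A. \<forall>p\<in>Xp. X + p \<in> A"
    and Acl: "closed A" and Apointed: "A \<inter> uminus ` A = {0}"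
    and Pcl: "closed P"
    and V1as: "anti_star_shaped Xp V1"
    and V1usc: "usc_wrt Xp V1"
    and L0: "LL P V0 V1 A = {0}"
begin

lemma usc_closed_limit:
  assumes lim: "(g \<longlongrightarrow> d) F" and nb: "F \<noteq> bot" and ev: "eventually (\<lambda>k. V1 (g k) \<in> A) F"
  shows "V1 d \<in> A"
proof (rule ccontr)
  assume nA: "V1 d \<notin> A"
  have "open (- A)" using Acl by (simp add: closed_def)
  then obtain V where V: "open V" "d \<in> V" "V1 ` V \<subseteq> {u - p |u p. u \<in> - A \<and> p \<in> Xp}"
  proof -
    have "V1 d \<in> - A" using nA by simp
    thus ?thesis using V1usc \<open>open (- A)\<close> that unfolding usc_wrt_def by blast
  qed
  have "eventually (\<lambda>k. g k \<in> V) F" using topological_tendstoD[OF lim V(1,2)] .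
  hence "eventually (\<lambda>k. g k \<in> V \<and> V1 (g k) \<in> A) F" using ev by (simp add: eventually_conj)
  then obtain k where k: "g k \<in> V" "V1 (g k) \<in> A" using eventually_happens'[OF nb] by blast
  then obtain u p where up: "V1 (g k) = u - p" "u \<notin> A" "p \<in> Xp" using V(3) by blast
  have "V1 (g k) + p \<in> A" using AXp k(2) up(3) by blast
  thus False using up by simp
qed

lemma neg_in_A:
  fixes x :: "nat \<Rightarrow> real^'n"
  assumes X: "X \<in> A" and seq: "\<forall>k. - real k *\<^sub>R X + V1 (x k) \<in> A"
    and r: "strict_mono r" and lim: "(x \<circ> r) \<longlonglongrightarrow> xs"
  shows "- X \<in> A"
proof (rule ccontr)
  assume nA: "- X \<notin> A"
  define g where "g p = - X + fst p *\<^sub>R snd p" for p :: "real \<times> 'x"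
  have gc: "continuous_on UNIV g"
  proof -
    have "continuous_on UNIV (\<lambda>p::real \<times> 'x. fst p *\<^sub>R snd p)" using tvs unfolding tvs_def by blast
    moreover have "continuous_on UNIV (\<lambda>u::'x. - X + u)" using tvs_add_cont[OF tvs] .
    ultimately show ?thesis unfolding g_def
      using continuous_on_compose2[of UNIV "\<lambda>u::'x. - X + u" UNIV "\<lambda>p::real \<times> 'x. fst p *\<^sub>R snd p"] by simp
  qed
  have "open (- A)" using Acl by (simp add: closed_def)
  hence Go: "open (g -` (- A))" by (rule cont_vimage_open[OF gc])
  have "(0, V1 xs) \<in> g -` (- A)" using nA unfolding g_def by simp
  then obtain S U where SU: "open S" "open U" "(0, V1 xs) \<in> S \<times> U" "S \<times> U \<subseteq> g -` (- A)"
    using open_prod_elim[OF Go] by blast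
  obtain V where V: "open V" "xs \<in> V" "V1 ` V \<subseteq> {u - p |u p. u \<in> U \<and> p \<in> Xp}"
  proof -
    have "V1 xs \<in> U" using SU(3) by simp
    thus ?thesis using V1usc SU(2) that unfolding usc_wrt_def by blast
  qed
  have e1: "eventually (\<lambda>k. (x \<circ> r) k \<in> V) sequentially" using topological_tendstoD[OF lim V(1,2)] .
  have "(\<lambda>k. inverse (real (r k))) \<longlonglongrightarrow> 0"
    using LIMSEQ_subseq_LIMSEQ[OF lim_inverse_n r] by (simp add: o_def)
  hence e2: "eventually (\<lambda>k. inverse (real (r k)) \<in> S) sequentially"
  proof -
    have "0 \<in> S" using SU(3) by simp
    thus ?thesis using topological_tendstoD[OF _ SU(1)] \<open>(\<lambda>k. inverse (real (r k))) \<longlonglongrightarrow> 0\<close> by blast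
  qed
  have e3: "eventually (\<lambda>k. 1 \<le> r k) sequentially"
    unfolding eventually_sequentially
  proof (intro exI[of _ 1] allI impI)
    fix k :: nat assume "1 \<le> k" thus "1 \<le> r k" using seq_suble[OF r, of k] by linarith
  qed
  have "eventually (\<lambda>k. x (r k) \<in> V \<and> inverse (real (r k)) \<in> S \<and> 1 \<le> r k) sequentially"
    using e1 e2 e3 by (simp add: eventually_conj o_def)
  then obtain k where k: "x (r k) \<in> V" "inverse (real (r k)) \<in> S" "1 \<le> r k"
    unfolding eventually_sequentially by blast
  define n where "n = r k"
  have n: "real n > 0" using k(3) unfolding n_def by simp
  obtain u p where up: "V1 (x n) = u - p" "u \<in> U" "p \<in> Xp" using V(3) k(1) unfolding n_def by blast
  have "inverse (real n) *\<^sub>R (- real n *\<^sub>R X + (u - p)) \<in> A"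
  proof -
    have "- real n *\<^sub>R X + V1 (x n) \<in> A" using seq by blast
    moreover have "0 \<le> inverse (real n)" using n by simp
    ultimately show ?thesis using cone_scale[OF Acone] up(1) by simp
  qed
  moreover have "inverse (real n) *\<^sub>R (- real n *\<^sub>R X + (u - p)) = (- X + inverse (real n) *\<^sub>R u) - inverse (real n) *\<^sub>R p"
    using n by (simp add: algebra_simps)
  ultimately have m: "(- X + inverse (real n) *\<^sub>R u) - inverse (real n) *\<^sub>R p \<in> A" by simp
  have "inverse (real n) *\<^sub>R p \<in> Xp" using cone_scale[OF Xp up(3), of "inverse (real n)"] n by simp
  hence "(- X + inverse (real n) *\<^sub>R u) - inverse (real n) *\<^sub>R p + inverse (real n) *\<^sub>R p \<in> A"
    using AXp m by blast
  hence "g (inverse (real n), u) \<in> A" unfolding g_def by simp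
  moreover have "(inverse (real n), u) \<in> S \<times> U" using k(2) up(2) unfolding n_def by simp
  ultimately show False using SU(4) by blast
qed

lemma unbounded_contra:
  fixes y :: "nat \<Rightarrow> real^'n"
  assumes yP: "\<forall>k. y k \<in> P" and yV0: "\<forall>k. V0 (y k) \<le> 1" and yA: "\<forall>k. V1 (y k) \<in> A"
    and yn: "\<forall>k. real k + 1 \<le> norm (y k)"
  shows False
proof -
  define z where "z k = inverse (norm (y k)) *\<^sub>R y k" for k
  have ny: "norm (y k) > 0" for k using yn[rule_format, of k] by linarith
  have nz: "norm (z k) = 1" for k unfolding z_def using ny[of k] by simp
  have "bounded (range z)" unfolding bounded_iff using nz by auto
  then obtain d r where r: "strict_mono r" "(z \<circ> r) \<longlonglongrightarrow> d"
    using bounded_imp_convergent_subsequence by blast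
  have nd: "norm d = 1"
  proof -
    have "(\<lambda>k. norm ((z \<circ> r) k)) \<longlonglongrightarrow> norm d" by (rule tendsto_norm[OF r(2)])
    moreover have "(\<lambda>k. norm ((z \<circ> r) k)) = (\<lambda>k. 1)" using nz by (simp add: o_def)
    ultimately have "(\<lambda>k. 1::real) \<longlonglongrightarrow> norm d" by simp
    thus ?thesis using LIMSEQ_unique[OF tendsto_const] by metis
  qed
  define lam where "lam k = inverse (norm (y (r k)))" for k
  have lam0: "0 \<le> lam k" "lam k \<le> 1" for k
  proof -
    show "0 \<le> lam k" unfolding lam_def by simp
    have "1 \<le> norm (y (r k))" using yn[rule_format, of "r k"] by simp
    thus "lam k \<le> 1" unfolding lam_def by (simp add: inverse_le_1_iff)
  qed
  have laml: "lam \<longlonglongrightarrow> 0"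
  proof (rule Lim_null_comparison[OF _ LIMSEQ_inverse_real_of_nat])
    show "\<forall>\<^sub>F k in sequentially. norm (lam k) \<le> inverse (real (Suc k))"
    proof (rule always_eventually, rule allI)
      fix k
      have "real k + 1 \<le> real (r k) + 1" using seq_suble[OF r(1), of k] by simp
      also have "\<dots> \<le> norm (y (r k))" using yn by blast
      finally have "real (Suc k) \<le> norm (y (r k))" by simp
      thus "norm (lam k) \<le> inverse (real (Suc k))" unfolding lam_def using lam0[of k]
        by (simp add: lam_def le_imp_inverse_le)
    qed
  qed
  have w: "lam k *\<^sub>R y (r k) = (z \<circ> r) k" for k unfolding lam_def z_def by simp
  have wA: "V1 (lam k *\<^sub>R y (r k)) \<in> A" for k
  proof -
    have "V1 (lam k *\<^sub>R y (r k)) - lam k *\<^sub>R V1 (y (r k)) \<in> Xp"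
      using V1as lam0[of k] unfolding anti_star_shaped_def by blast
    moreover have "lam k *\<^sub>R V1 (y (r k)) \<in> A" using cone_scale[OF Acone yA[rule_format] lam0(1)] .
    ultimately have "lam k *\<^sub>R V1 (y (r k)) + (V1 (lam k *\<^sub>R y (r k)) - lam k *\<^sub>R V1 (y (r k))) \<in> A"
      using AXp by blast
    thus ?thesis by simp
  qed
  have V1d: "V1 d \<in> A"
  proof (rule usc_closed_limit[of "\<lambda>k. lam k *\<^sub>R y (r k)" d sequentially])
    show "((\<lambda>k. lam k *\<^sub>R y (r k)) \<longlongrightarrow> d) sequentially" using r(2) w by (simp add: o_def)
    show "sequentially \<noteq> bot" by simp
    show "\<forall>\<^sub>F k in sequentially. V1 (lam k *\<^sub>R y (r k)) \<in> A" using wA by simp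
  qed
  have dP: "d \<in> asym_cone P"
    by (rule asym_seq[of "\<lambda>k. y (r k)" _ lam]) (use yP lam0 laml r(2) w in \<open>auto simp: o_def\<close>)
  have "(d, 0) \<in> asym_cone (epi V0)"
  proof (rule asym_seq[of "\<lambda>k. (y (r k), 1)" _ lam])
    show "\<forall>k. (y (r k), 1) \<in> epi V0" using yV0 unfolding epi_def by simp
    show "\<forall>k. 0 \<le> lam k" using lam0 by simp
    show "lam \<longlonglongrightarrow> 0" by (rule laml)
    have "(\<lambda>k. (lam k *\<^sub>R y (r k), lam k)) \<longlonglongrightarrow> (d, 0)"
      by (rule tendsto_Pair) (use r(2) w laml in \<open>auto simp: o_def\<close>)
    thus "(\<lambda>k. lam k *\<^sub>R (y (r k), 1::real)) \<longlonglongrightarrow> (d, 0)" by simp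
  qed
  hence dV0: "asym_fun V0 d \<le> 0" unfolding asym_fun_def
    by (intro Inf_lower2[of "ereal 0"]) (auto simp: zero_ereal_def)
  have dA: "V1 d \<in> asym_cone A"
  proof (rule asym_seq[of "\<lambda>k. real (Suc k) *\<^sub>R V1 d" _ "\<lambda>k. inverse (real (Suc k))"])
    show "\<forall>k. real (Suc k) *\<^sub>R V1 d \<in> A" using cone_scale[OF Acone V1d] by simp
    show "\<forall>k. 0 \<le> inverse (real (Suc k))" by simp
    show "(\<lambda>k. inverse (real (Suc k))) \<longlonglongrightarrow> 0" by (rule LIMSEQ_inverse_real_of_nat)
    show "(\<lambda>k. inverse (real (Suc k)) *\<^sub>R real (Suc k) *\<^sub>R V1 d) \<longlonglongrightarrow> V1 d" by simp
  qed
  have "d \<in> LL P V0 V1 A" unfolding LL_def using dP dV0 dA by simp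
  hence "d = 0" using L0 by simp
  thus False using nd by simp
qed

lemmas FMc = FM_eq[OF tvs P0 V00 V10 A0 lc proper cvx lsc_rho Acone]
lemmas D_posc = D_pos[OF tvs P0 V00 V10 A0 lc proper cvx lsc_rho Acone]
lemmas R_0c = R_0[OF tvs P0 V00 V10 A0 lc proper cvx lsc_rho Acone]

lemma pos_exists:
  assumes X: "X \<in> A" "X \<noteq> 0"
  shows "\<exists>\<psi>\<in>DD P V0 V1 A. \<psi> X > 0"
proof (rule ccontr)
  assume "\<not> ?thesis"
  hence z: "\<forall>\<psi>\<in>DD P V0 V1 A. \<psi> X = 0" using D_posc X(1) by (meson not_less order_antisym)
  have Rk: "rho P V0 V1 A (- real k *\<^sub>R X) = rho P V0 V1 A 0" for k
  proof -
    have h: "\<psi> (- real k *\<^sub>R X) = \<psi> 0" if "\<psi> \<in> DD P V0 V1 A" for \<psi>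
    proof -
      have "linear \<psi>" using that unfolding DD_def topdual_def by auto
      thus ?thesis using z that by (simp add: linF)
    qed
    have "(SUP \<psi>\<in>DD P V0 V1 A. sigmaPV P V0 V1 \<psi> - ereal (\<psi> (- real k *\<^sub>R X)))
         = (SUP \<psi>\<in>DD P V0 V1 A. sigmaPV P V0 V1 \<psi> - ereal (\<psi> 0))"
    proof (rule SUP_cong[OF refl])
      fix \<psi> assume "\<psi> \<in> DD P V0 V1 A"
      thus "sigmaPV P V0 V1 \<psi> - ereal (\<psi> (- real k *\<^sub>R X)) = sigmaPV P V0 V1 \<psi> - ereal (\<psi> 0)"
        using h[of \<psi>] by simp
    qed
    thus ?thesis using FMc by metis
  qed
  have "\<exists>x. x \<in> P \<and> V0 x < 1 \<and> - real k *\<^sub>R X + V1 x \<in> A" for k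
  proof -
    have "rho P V0 V1 A (- real k *\<^sub>R X) < 1" using Rk R_0c by (simp add: order_le_less_trans)
    hence "\<exists>v\<in>(\<lambda>x. ereal (V0 x)) ` {x \<in> P. - real k *\<^sub>R X + V1 x \<in> A}. v < 1"
      unfolding rho_def by (simp add: Inf_less_iff)
    thus ?thesis by auto
  qed
  then obtain x where x: "\<forall>k. x k \<in> P \<and> V0 (x k) < 1 \<and> - real k *\<^sub>R X + V1 (x k) \<in> A" by metis
  have xA: "V1 (x k) \<in> A" for k
  proof -
    have a: "- real k *\<^sub>R X + V1 (x k) \<in> A" using x by blast
    have b: "real k *\<^sub>R X \<in> A" using cone_scale[OF Acone X(1)] by simp
    have "(- real k *\<^sub>R X + V1 (x k)) + real k *\<^sub>R X \<in> A"
      by (rule cone_add[OF Acone a b])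
    thus ?thesis by simp
  qed
  show False
  proof (cases "bounded (range x)")
    case True
    then obtain xs r where r: "strict_mono r" "(x \<circ> r) \<longlonglongrightarrow> xs"
      using bounded_imp_convergent_subsequence by blast
    have "- X \<in> A" by (rule neg_in_A[OF X(1) _ r]) (use x in blast)
    hence "X \<in> A \<inter> uminus ` A" using X(1) by (metis IntI image_eqI minus_minus)
    thus False using Apointed X(2) by blast
  next
    case False
    have "\<forall>a. \<exists>k. a < norm (x k)"
    proof
      fix a show "\<exists>k. a < norm (x k)"
      proof (rule ccontr)
        assume "\<not> (\<exists>k. a < norm (x k))"
        hence "\<forall>y\<in>range x. norm y \<le> a" by (auto simp: not_less)
        thus False using False unfolding bounded_iff by blast
      qed
    qed
    hence "\<forall>k::nat. \<exists>j. real k + 1 < norm (x j)" by blast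
    then obtain n where n: "\<forall>k. real k + 1 < norm (x (n k))" by metis
    show False
    proof (rule unbounded_contra[of "\<lambda>k. x (n k)"])
      show "\<forall>k. x (n k) \<in> P" using x by blast
      show "\<forall>k. V0 (x (n k)) \<le> 1" using x less_imp_le by blast
      show "\<forall>k. V1 (x (n k)) \<in> A" using xA by blast
      show "\<forall>k. real k + 1 \<le> norm (x (n k))" using n less_imp_le by blast
    qed
  qed
qed

end

lemma gen_top_nbhd:
  assumes "generate_topology_on {{a \<in> S. f a \<in> U} |f U. f \<in> fs \<and> open U} W" and "x0 \<in> W"
  shows "\<exists>L. (\<forall>z\<in>set L. fst z \<in> fs \<and> open (snd z)) \<and> x0 \<in> {a \<in> S. \<forall>z\<in>set L. fst z a \<in> snd z}
            \<and> {a \<in> S. \<forall>z\<in>set L. fst z a \<in> snd z} \<subseteq> W"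
  using assms
proof (induction arbitrary: x0 rule: generate_topology_on.induct)
  case Empty thus ?case by simp
next
  case (Int a b)
  obtain L1 where L1: "\<forall>z\<in>set L1. fst z \<in> fs \<and> open (snd z)" "x0 \<in> {a \<in> S. \<forall>z\<in>set L1. fst z a \<in> snd z}"
    "{a \<in> S. \<forall>z\<in>set L1. fst z a \<in> snd z} \<subseteq> a" using Int by blast
  obtain L2 where L2: "\<forall>z\<in>set L2. fst z \<in> fs \<and> open (snd z)" "x0 \<in> {a \<in> S. \<forall>z\<in>set L2. fst z a \<in> snd z}"
    "{a \<in> S. \<forall>z\<in>set L2. fst z a \<in> snd z} \<subseteq> b" using Int by blast
  show ?case
    by (rule exI[of _ "L1 @ L2"]) (use L1 L2 in auto)
next
  case (UN K)
  then obtain k where "k \<in> K" "x0 \<in> k" by blast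
  thus ?case using UN.IH[of k x0] by blast
next
  case (Basis s)
  then obtain f U where fU: "s = {a \<in> S. f a \<in> U}" "f \<in> fs" "open U" by blast
  show ?case by (rule exI[of _ "[(f, U)]"]) (use fU Basis.prems in auto)
qed

lemma gen_top_eventually:
  assumes "generate_topology_on {{a \<in> S. f a \<in> U} |f U. f \<in> fs \<and> open U} W" and "x0 \<in> W"
    and lim: "\<forall>f\<in>fs. ((\<lambda>m. f (s m)) \<longlongrightarrow> f x0) F" and ev: "eventually (\<lambda>m. s m \<in> S) F"
  shows "eventually (\<lambda>m. s m \<in> W) F"
  using assms(1,2)
proof (induction rule: generate_topology_on.induct)
  case Empty thus ?case by simp
next
  case (Int a b)
  have "x0 \<in> a" "x0 \<in> b" using Int.prems by auto
  hence "eventually (\<lambda>m. s m \<in> a) F" "eventually (\<lambda>m. s m \<in> b) F" using Int.IH by blast+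
  hence "eventually (\<lambda>m. s m \<in> a \<and> s m \<in> b) F" by (rule eventually_conj)
  thus ?case by simp
next
  case (UN K)
  then obtain k where k: "k \<in> K" "x0 \<in> k" by blast
  have "eventually (\<lambda>m. s m \<in> k) F" using UN.IH[OF k(1)] k(2) by blast
  thus ?case by (rule eventually_mono) (use k(1) in blast)
next
  case (Basis s')
  then obtain f U where fU: "s' = {a \<in> S. f a \<in> U}" "f \<in> fs" "open U" by blast
  hence "f x0 \<in> U" using Basis.prems by simp
  hence "eventually (\<lambda>m. f (s m) \<in> U) F" using topological_tendstoD lim fU by blast
  hence "eventually (\<lambda>m. s m \<in> S \<and> f (s m) \<in> U) F" using ev by (intro eventually_conj)
  thus ?case unfolding fU(1) by (rule eventually_mono) simp
qed

lemma half_sums: "(\<lambda>k. (1/2::real) ^ Suc k) sums 1"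
proof -
  have "(\<lambda>k. (1/2::real) ^ k) sums (1 / (1 - 1/2))" by (rule geometric_sums) simp
  hence "(\<lambda>k. (1/2) * (1/2::real) ^ k) sums ((1/2) * (1 / (1 - 1/2)))" by (rule sums_mult)
  thus ?thesis by simp
qed

context
  fixes Xp :: "'x::{real_vector,topological_space} set"
    and P :: "(real^'n) set"
    and V0 :: "real^'n \<Rightarrow> real"
    and V1 :: "real^'n \<Rightarrow> 'x"
    and A :: "'x set"
    and Phi :: "('x \<Rightarrow> real) \<Rightarrow> ('y::real_normed_vector \<Rightarrow> real)"
    and ye :: "nat \<Rightarrow> 'y"
  assumes tvs: "tvs TYPE('x)"
    and P0: "0 \<in> P"
    and V00: "V0 0 = 0"
    and V10: "V1 0 = 0"
    and A0: "0 \<in> A"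
    and lc: "locally_convex TYPE('x)"
    and proper: "proper_fun (rho P V0 V1 A)"
    and cvx: "convex_efun (rho P V0 V1 A)"
    and lsc_rho: "lsc (rho P V0 V1 A)"
    and Acone: "convex_cone A"
    and Xp: "convex_cone Xp"
    and AXp: "\<forall>X\<in>A. \<forall>p\<in>Xp. X + p \<in> A"
    and Acl: "closed A" and Apointed: "A \<inter> uminus ` A = {0}"
    and Pcl: "closed P"
    and V1as: "anti_star_shaped Xp V1"
    and V1usc: "usc_wrt Xp V1"
    and L0: "LL P V0 V1 A = {0}"
    and bij: "bij_betw Phi (topdual TYPE('x)) {g. bounded_linear g}"
    and Plin: "\<forall>\<psi>\<in>topdual TYPE('x). \<forall>\<phi>\<in>topdual TYPE('x). \<forall>a b.
            Phi (\<lambda>X. a * \<psi> X + b * \<phi> X) = (\<lambda>y. a * Phi \<psi> y + b * Phi \<phi> y)"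
    and Ptop: "\<forall>U. openin (weak_top (topdual TYPE('x)) {(\<lambda>\<psi>. \<psi> X) |X. True}) U \<longrightarrow>
             openin (weak_top (topdual TYPE('x)) {(\<lambda>\<psi>. Phi \<psi> y) |y. True}) U"
    and dense: "closure (range ye) = UNIV"
begin

lemmas FM_all = tvs P0 V00 V10 A0 lc proper cvx lsc_rho Acone
lemmas Pos_all = FM_all Xp AXp Acl Apointed Pcl V1as V1usc L0

lemma Phi_bl: "\<psi> \<in> topdual TYPE('x) \<Longrightarrow> bounded_linear (Phi \<psi>)"
  using bij_betwE[OF bij] by blast

definition Dn :: "nat \<Rightarrow> ('x \<Rightarrow> real) set" where
  "Dn n = {\<psi> \<in> DD P V0 V1 A. ereal (- real n) \<le> sigmaPV P V0 V1 \<psi> \<and> (\<forall>y. \<bar>Phi \<psi> y\<bar> \<le> real n * norm y)}"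

lemma D_T: "\<psi> \<in> DD P V0 V1 A \<Longrightarrow> \<psi> \<in> topdual TYPE('x)"
  unfolding DD_def by auto

lemma Dn_cover: "\<psi> \<in> DD P V0 V1 A \<Longrightarrow> \<exists>n. \<psi> \<in> Dn n"
proof -
  assume d: "\<psi> \<in> DD P V0 V1 A"
  obtain s where s: "sigmaPV P V0 V1 \<psi> = ereal s" using D_real[OF FM_all d] by blast
  obtain K where K: "\<forall>y. norm (Phi \<psi> y) \<le> norm y * K"
    using bounded_linear.bounded[OF Phi_bl[OF D_T[OF d]]] by blast
  define n where "n = nat \<lceil>max (- s) K\<rceil>"
  have n1: "- real n \<le> s" unfolding n_def by linarith
  have n2: "K \<le> real n" unfolding n_def by linarith
  have "\<bar>Phi \<psi> y\<bar> \<le> real n * norm y" for y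
  proof -
    have "\<bar>Phi \<psi> y\<bar> \<le> norm y * K" using K by simp
    also have "\<dots> \<le> norm y * real n" using n2 by (simp add: mult_left_mono)
    finally show ?thesis by (simp add: mult.commute)
  qed
  thus ?thesis using d s n1 unfolding Dn_def by (intro exI[of _ n]) auto
qed

lemma approx_point:
  assumes psi0: "\<psi>0 \<in> Dn n" and Ob: "open Ob" "Phi \<psi>0 y \<in> Ob"
  shows "\<exists>z::nat \<times> rat \<times> rat. \<bar>Phi \<psi>0 (ye (fst z)) - real_of_rat (fst (snd z))\<bar> < real_of_rat (snd (snd z)) \<and>
     (\<forall>\<psi>\<in>Dn n. \<bar>Phi \<psi> (ye (fst z)) - real_of_rat (fst (snd z))\<bar> < real_of_rat (snd (snd z)) \<longrightarrow> Phi \<psi> y \<in> Ob)"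
proof -
  obtain \<epsilon> where \<epsilon>: "\<epsilon> > 0" "\<forall>v. dist v (Phi \<psi>0 y) < \<epsilon> \<longrightarrow> v \<in> Ob" using Ob unfolding open_dist by blast
  define \<delta> where "\<delta> = \<epsilon> / (4 * (real n + 1))"
  have \<delta>: "\<delta> > 0" unfolding \<delta>_def using \<epsilon> by simp
  have "y \<in> closure (range ye)" using dense by simp
  then obtain d where d: "d \<in> range ye" "dist d y < \<delta>" using \<delta> unfolding closure_approachable by blast
  then obtain k where k: "ye k = d" by blast
  obtain qr where qr: "qr \<in> \<rat>" "Phi \<psi>0 d - \<epsilon>/8 < qr" "qr < Phi \<psi>0 d + \<epsilon>/8"
    using Rats_dense_in_real[of "Phi \<psi>0 d - \<epsilon>/8" "Phi \<psi>0 d + \<epsilon>/8"] \<epsilon> by auto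
  obtain q where q: "qr = real_of_rat q" using qr(1) Rats_cases by blast
  obtain er where er: "er \<in> \<rat>" "\<epsilon>/8 < er" "er < \<epsilon>/4"
    using Rats_dense_in_real[of "\<epsilon>/8" "\<epsilon>/4"] \<epsilon> by auto
  obtain e where e: "er = real_of_rat e" using er(1) Rats_cases by blast
  have psi0n: "\<forall>y. \<bar>Phi \<psi>0 y\<bar> \<le> real n * norm y" "\<psi>0 \<in> topdual TYPE('x)"
    using psi0 D_T unfolding Dn_def by auto
  have nd: "real n * norm (y - d) \<le> \<epsilon> / 4 * (real n / (real n + 1))"
  proof -
    have "norm (y - d) \<le> \<delta>" using d(2) by (simp add: dist_norm norm_minus_commute)
    hence "real n * norm (y - d) \<le> real n * \<delta>" by (simp add: mult_left_mono)
    also have "\<dots> = \<epsilon> / 4 * (real n / (real n + 1))" unfolding \<delta>_def by (simp add: field_simps)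
    finally show ?thesis .
  qed
  have nd2: "\<epsilon> / 4 * (real n / (real n + 1)) < \<epsilon> / 4"
  proof -
    have "real n / (real n + 1) < 1" by simp
    hence "\<epsilon> / 4 * (real n / (real n + 1)) < \<epsilon> / 4 * 1"
      by (rule mult_strict_left_mono) (use \<epsilon> in simp)
    thus ?thesis by simp
  qed
  show ?thesis
  proof (intro exI[of _ "(k, q, e)"] conjI ballI impI)
    show "\<bar>Phi \<psi>0 (ye (fst (k, q, e))) - real_of_rat (fst (snd (k, q, e)))\<bar> < real_of_rat (snd (snd (k, q, e)))"
      using qr er q e k by simp
    fix \<psi> assume psi: "\<psi> \<in> Dn n"
      and c: "\<bar>Phi \<psi> (ye (fst (k, q, e))) - real_of_rat (fst (snd (k, q, e)))\<bar> < real_of_rat (snd (snd (k, q, e)))"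
    have psin: "\<forall>y. \<bar>Phi \<psi> y\<bar> \<le> real n * norm y" "\<psi> \<in> topdual TYPE('x)"
      using psi D_T unfolding Dn_def by auto
    have c': "\<bar>Phi \<psi> d - qr\<bar> < er" using c k q e by simp
    have l1: "Phi \<psi> y - Phi \<psi> d = Phi \<psi> (y - d)" using bounded_linear.linear[OF Phi_bl[OF psin(2)]] by (simp add: linF)
    have l2: "Phi \<psi>0 y - Phi \<psi>0 d = Phi \<psi>0 (y - d)" using bounded_linear.linear[OF Phi_bl[OF psi0n(2)]] by (simp add: linF)
    have "\<bar>Phi \<psi> y - Phi \<psi>0 y\<bar> \<le> \<bar>Phi \<psi> (y - d)\<bar> + \<bar>Phi \<psi> d - qr\<bar> + \<bar>qr - Phi \<psi>0 d\<bar> + \<bar>Phi \<psi>0 (y - d)\<bar>"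
      using l1 l2 by linarith
    also have "\<dots> < \<epsilon>"
      using psin(1)[rule_format, of "y - d"] psi0n(1)[rule_format, of "y - d"] nd nd2 c' er qr by linarith
    finally have "dist (Phi \<psi> y) (Phi \<psi>0 y) < \<epsilon>" by (simp add: dist_real_def)
    thus "Phi \<psi> y \<in> Ob" using \<epsilon> by blast
  qed
qed

definition cnd :: "(nat \<times> rat \<times> rat) list \<Rightarrow> ('x \<Rightarrow> real) \<Rightarrow> bool" where
  "cnd L \<psi> \<longleftrightarrow> (\<forall>z\<in>set L. \<bar>Phi \<psi> (ye (fst z)) - real_of_rat (fst (snd z))\<bar> < real_of_rat (snd (snd z)))"

definition Ds :: "('x \<Rightarrow> real) set" where
  "Ds = (\<lambda>nL. SOME \<psi>. \<psi> \<in> Dn (fst nL) \<and> cnd (snd nL) \<psi>) ` {nL. \<exists>\<psi>. \<psi> \<in> Dn (fst nL) \<and> cnd (snd nL) \<psi>}"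

lemma Ds_mem:
  assumes "\<psi> \<in> Dn n" "cnd L \<psi>"
  shows "(SOME \<psi>. \<psi> \<in> Dn n \<and> cnd L \<psi>) \<in> Ds" and "(SOME \<psi>. \<psi> \<in> Dn n \<and> cnd L \<psi>) \<in> Dn n \<and> cnd L (SOME \<psi>. \<psi> \<in> Dn n \<and> cnd L \<psi>)"
proof -
  have "(n, L) \<in> {nL. \<exists>\<psi>. \<psi> \<in> Dn (fst nL) \<and> cnd (snd nL) \<psi>}" using assms by auto
  moreover have "(SOME \<psi>. \<psi> \<in> Dn n \<and> cnd L \<psi>) = (\<lambda>nL. SOME \<psi>. \<psi> \<in> Dn (fst nL) \<and> cnd (snd nL) \<psi>) (n, L)"
    by simp
  ultimately show "(SOME \<psi>. \<psi> \<in> Dn n \<and> cnd L \<psi>) \<in> Ds" unfolding Ds_def by (rule rev_image_eqI)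
  show "(SOME \<psi>. \<psi> \<in> Dn n \<and> cnd L \<psi>) \<in> Dn n \<and> cnd L (SOME \<psi>. \<psi> \<in> Dn n \<and> cnd L \<psi>)"
    using someI_ex[of "\<lambda>\<psi>. \<psi> \<in> Dn n \<and> cnd L \<psi>"] assms by blast
qed

lemma Ds_sub: "\<psi> \<in> Ds \<Longrightarrow> \<exists>n. \<psi> \<in> Dn n"
proof -
  assume "\<psi> \<in> Ds"
  then obtain nL where nL: "\<exists>\<psi>. \<psi> \<in> Dn (fst nL) \<and> cnd (snd nL) \<psi>" "\<psi> = (SOME \<psi>. \<psi> \<in> Dn (fst nL) \<and> cnd (snd nL) \<psi>)"
    unfolding Ds_def by blast
  hence "\<psi> \<in> Dn (fst nL)" using someI_ex[OF nL(1)] by simp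
  thus ?thesis by blast
qed

lemma Ds_countable: "countable Ds"
  unfolding Ds_def by simp

lemma density:
  assumes psi0: "\<psi>0 \<in> Dn n" and pos: "\<psi>0 X > 0"
  shows "\<exists>\<psi>\<in>Ds. \<psi> X > 0"
proof -
  define T where "T = topdual TYPE('x)"
  define U where "U = {a \<in> T. a X \<in> {0<..}}"
  have "(\<lambda>\<psi>::'x\<Rightarrow>real. \<psi> X) \<in> {(\<lambda>\<psi>. \<psi> X) |X. True}" by blast
  hence "U \<in> {{a \<in> T. f a \<in> U'} |f U'. f \<in> {(\<lambda>\<psi>. \<psi> X) |X. True} \<and> open U'}"
    unfolding U_def by (intro CollectI exI[of _ "\<lambda>\<psi>::'x\<Rightarrow>real. \<psi> X"] exI[of _ "{0::real<..}"]) simp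
  hence "openin (weak_top T {(\<lambda>\<psi>. \<psi> X) |X. True}) U"
    unfolding weak_top_def by (rule topology_generated_by_Basis)
  hence "openin (weak_top T {(\<lambda>\<psi>. Phi \<psi> y) |y. True}) U" using Ptop unfolding T_def by blast
  hence g: "generate_topology_on {{a \<in> T. f a \<in> U'} |f U'. f \<in> {(\<lambda>\<psi>. Phi \<psi> y) |y. True} \<and> open U'} U"
    unfolding weak_top_def by (simp add: openin_topology_generated_by_iff)
  have psi0T: "\<psi>0 \<in> T" using psi0 D_T unfolding Dn_def T_def by auto
  have "\<psi>0 \<in> U" using psi0T pos unfolding U_def by simp
  then obtain L where L: "\<forall>z\<in>set L. fst z \<in> {(\<lambda>\<psi>. Phi \<psi> y) |y. True} \<and> open (snd z)"
    "\<psi>0 \<in> {a \<in> T. \<forall>z\<in>set L. fst z a \<in> snd z}" "{a \<in> T. \<forall>z\<in>set L. fst z a \<in> snd z} \<subseteq> U"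
    using gen_top_nbhd[OF g] by blast
  have ex: "\<forall>z\<in>set L. \<exists>w::nat \<times> rat \<times> rat. \<bar>Phi \<psi>0 (ye (fst w)) - real_of_rat (fst (snd w))\<bar> < real_of_rat (snd (snd w)) \<and>
     (\<forall>\<psi>\<in>Dn n. \<bar>Phi \<psi> (ye (fst w)) - real_of_rat (fst (snd w))\<bar> < real_of_rat (snd (snd w)) \<longrightarrow> fst z \<psi> \<in> snd z)"
  proof
    fix z assume z: "z \<in> set L"
    then obtain y where y: "fst z = (\<lambda>\<psi>. Phi \<psi> y)" using L(1) by blast
    have "Phi \<psi>0 y \<in> snd z" using L(2) z y by auto
    thus "\<exists>w::nat \<times> rat \<times> rat. \<bar>Phi \<psi>0 (ye (fst w)) - real_of_rat (fst (snd w))\<bar> < real_of_rat (snd (snd w)) \<and>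
     (\<forall>\<psi>\<in>Dn n. \<bar>Phi \<psi> (ye (fst w)) - real_of_rat (fst (snd w))\<bar> < real_of_rat (snd (snd w)) \<longrightarrow> fst z \<psi> \<in> snd z)"
    proof -
      have o: "open (snd z)" using L(1) z by blast
      show ?thesis using approx_point[OF psi0 o \<open>Phi \<psi>0 y \<in> snd z\<close>] unfolding y by blast
    qed
  qed
  obtain f where f: "\<forall>z\<in>set L. \<bar>Phi \<psi>0 (ye (fst (f z))) - real_of_rat (fst (snd (f z)))\<bar> < real_of_rat (snd (snd (f z))) \<and>
     (\<forall>\<psi>\<in>Dn n. \<bar>Phi \<psi> (ye (fst (f z))) - real_of_rat (fst (snd (f z)))\<bar> < real_of_rat (snd (snd (f z))) \<longrightarrow> fst z \<psi> \<in> snd z)"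
    using bchoice[OF ex] by blast
  define L' where "L' = map f L"
  have c0: "cnd L' \<psi>0" unfolding cnd_def
  proof
    fix w assume "w \<in> set L'"
    then obtain z where "z \<in> set L" "w = f z" unfolding L'_def by auto
    thus "\<bar>Phi \<psi>0 (ye (fst w)) - real_of_rat (fst (snd w))\<bar> < real_of_rat (snd (snd w))" using f by blast
  qed
  define \<psi>1 where "\<psi>1 = (SOME \<psi>. \<psi> \<in> Dn n \<and> cnd L' \<psi>)"
  have p1: "\<psi>1 \<in> Ds" "\<psi>1 \<in> Dn n" "cnd L' \<psi>1" using Ds_mem[OF psi0 c0] unfolding \<psi>1_def by blast+
  have "\<forall>z\<in>set L. fst z \<psi>1 \<in> snd z"
  proof
    fix z assume z: "z \<in> set L"
    have "f z \<in> set L'" unfolding L'_def using z by simp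
    hence "\<bar>Phi \<psi>1 (ye (fst (f z))) - real_of_rat (fst (snd (f z)))\<bar> < real_of_rat (snd (snd (f z)))"
      using p1(3) unfolding cnd_def by blast
    thus "fst z \<psi>1 \<in> snd z" using f z p1(2) by blast
  qed
  moreover have "\<psi>1 \<in> T" using p1(2) D_T unfolding Dn_def T_def by auto
  ultimately have "\<psi>1 \<in> U" using L(3) by blast
  thus ?thesis using p1(1) unfolding U_def by auto
qed

lemma Ds_ne: "Ds \<noteq> {}"
proof -
  obtain \<psi>0 where "\<psi>0 \<in> DD P V0 V1 A" using D_nonempty[OF FM_all] by blast
  then obtain n where n: "\<psi>0 \<in> Dn n" using Dn_cover by blast
  have "cnd [] \<psi>0" unfolding cnd_def by simp
  thus ?thesis using Ds_mem(1)[OF n] by blast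
qed

lemma Ds_D: "\<psi> \<in> Ds \<Longrightarrow> \<psi> \<in> DD P V0 V1 A"
  using Ds_sub unfolding Dn_def by blast

lemma weak_open_eval:
  "openin (weak_top (topdual TYPE('x)) {(\<lambda>\<psi>. Phi \<psi> y) |y. True}) {a \<in> topdual TYPE('x). a X \<in> V}"
  if "open V" for X V
proof -
  have "(\<lambda>\<psi>::'x\<Rightarrow>real. \<psi> X) \<in> {(\<lambda>\<psi>. \<psi> X) |X. True}" by blast
  hence "{a \<in> topdual TYPE('x). a X \<in> V} \<in> {{a \<in> topdual TYPE('x). f a \<in> U'} |f U'. f \<in> {(\<lambda>\<psi>. \<psi> X) |X. True} \<and> open U'}"
    using that by (intro CollectI exI[of _ "\<lambda>\<psi>::'x\<Rightarrow>real. \<psi> X"] exI[of _ V]) simp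
  hence "openin (weak_top (topdual TYPE('x)) {(\<lambda>\<psi>. \<psi> X) |X. True}) {a \<in> topdual TYPE('x). a X \<in> V}"
    unfolding weak_top_def by (rule topology_generated_by_Basis)
  thus ?thesis using Ptop by blast
qed

lemma Dstr_exists: "\<exists>\<psi>. \<psi> \<in> DDstr P V0 V1 A"
proof -
  define T where "T = topdual TYPE('x)"
  define \<psi>s where "\<psi>s = from_nat_into Ds"
  have rng: "range \<psi>s = Ds" unfolding \<psi>s_def using Ds_ne Ds_countable by simp
  have psD: "\<psi>s k \<in> DD P V0 V1 A" for k using rng Ds_D by blast
  have psT: "\<psi>s k \<in> T" for k using psD D_T unfolding T_def by blast
  define M where "M k = (SOME n. \<psi>s k \<in> Dn n)" for k
  have psM: "\<psi>s k \<in> Dn (M k)" for k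
    unfolding M_def by (rule someI_ex) (use Ds_sub rng in blast)
  define h where "h k = (1/2::real) ^ Suc k" for k
  have hpos: "h k > 0" for k unfolding h_def by simp
  have hs: "h sums 1" unfolding h_def by (rule half_sums)
  define c where "c k = h k / (1 + real (M k))" for k
  have cpos: "c k > 0" for k unfolding c_def using hpos[of k] by simp
  have cM: "c k * real (M k) \<le> h k" for k
  proof -
    have "c k * real (M k) = h k * (real (M k) / (1 + real (M k)))" unfolding c_def by simp
    also have "\<dots> \<le> h k * 1" using hpos[of k] by (intro mult_left_mono) auto
    finally show ?thesis by simp
  qed
  have cle: "c k \<le> h k" for k unfolding c_def using hpos[of k] by (simp add: divide_simps)
  have bnd: "\<bar>Phi (\<psi>s k) y\<bar> \<le> real (M k) * norm y" for k y using psM[of k] unfolding Dn_def by blast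
  have tb: "\<bar>c k * Phi (\<psi>s k) y\<bar> \<le> h k * norm y" for k y
  proof -
    have "\<bar>c k * Phi (\<psi>s k) y\<bar> = c k * \<bar>Phi (\<psi>s k) y\<bar>" using cpos[of k] by (simp add: abs_mult)
    also have "\<dots> \<le> c k * (real (M k) * norm y)" using bnd cpos[of k] by (simp add: mult_left_mono)
    also have "\<dots> = (c k * real (M k)) * norm y" by simp
    also have "\<dots> \<le> h k * norm y" using cM by (simp add: mult_right_mono)
    finally show ?thesis .
  qed
  have hys: "(\<lambda>k. h k * norm y) sums norm y" for y using sums_mult2[OF hs, of "norm y"] by simp
  have sy: "summable (\<lambda>k. c k * Phi (\<psi>s k) y)" for y
    by (rule summable_comparison_test'[OF sums_summable[OF hys[of y]], where N=0]) (use tb in simp)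
  define g where "g y = (\<Sum>k. c k * Phi (\<psi>s k) y)" for y
  have gs: "(\<lambda>k. c k * Phi (\<psi>s k) y) sums g y" for y unfolding g_def using sy by (simp add: summable_sums)
  have linps: "linear (Phi (\<psi>s k))" for k using bounded_linear.linear[OF Phi_bl[OF psT[unfolded T_def]]] .
  have gbl: "bounded_linear g"
  proof (rule bounded_linear_intro[where K = 1])
    fix y1 y2
    have "(\<lambda>k. c k * Phi (\<psi>s k) y1 + c k * Phi (\<psi>s k) y2) sums (g y1 + g y2)" by (rule sums_add[OF gs gs])
    moreover have "(\<lambda>k. c k * Phi (\<psi>s k) (y1 + y2)) = (\<lambda>k. c k * Phi (\<psi>s k) y1 + c k * Phi (\<psi>s k) y2)"
      using linps by (simp add: linF distrib_left)
    ultimately show "g (y1 + y2) = g y1 + g y2" using gs[of "y1 + y2"] sums_unique2 by metis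
  next
    fix r :: real and y
    have "(\<lambda>k. r * (c k * Phi (\<psi>s k) y)) sums (r * g y)" by (rule sums_mult[OF gs])
    moreover have "(\<lambda>k. c k * Phi (\<psi>s k) (r *\<^sub>R y)) = (\<lambda>k. r * (c k * Phi (\<psi>s k) y))"
      using linps by (simp add: linF mult.left_commute)
    ultimately show "g (r *\<^sub>R y) = r *\<^sub>R g y" using gs[of "r *\<^sub>R y"] sums_unique2 by (metis real_scaleR_def)
  next
    fix y
    have "g y \<le> norm y" by (rule sums_le[OF _ gs hys]) (use tb in \<open>simp add: abs_le_iff\<close>)
    moreover have "- norm y \<le> g y"
    proof (rule sums_le[OF _ sums_minus[OF hys] gs])
      fix n show "- (h n * norm y) \<le> c n * Phi (\<psi>s n) y" using tb[of n y] by (simp add: abs_le_iff)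
    qed
    ultimately show "norm (g y) \<le> norm y * 1" by simp
  qed
  define \<psi> where "\<psi> = inv_into T Phi g"
  have bijT: "bij_betw Phi T {g. bounded_linear g}" using bij unfolding T_def .
  have psiT: "\<psi> \<in> T"
  proof -
    have "g \<in> Phi ` T" using bij_betw_imp_surj_on[OF bijT] gbl by blast
    thus ?thesis unfolding \<psi>_def by (rule inv_into_into)
  qed
  have Phipsi: "Phi \<psi> = g" unfolding \<psi>_def by (rule bij_betw_inv_into_right[OF bijT]) (use gbl in simp)
  define S where "S m = (\<lambda>X. \<Sum>k<m. c k * \<psi>s k X)" for m
  have ST: "S m \<in> T \<and> Phi (S m) = (\<lambda>y. \<Sum>k<m. c k * Phi (\<psi>s k) y)" for m
  proof (induction m)
    case 0
    have "(\<lambda>X. 0 * \<psi>s 0 X + 0 * \<psi>s 0 X) \<in> T" using topdual_comb psT unfolding T_def by blast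
    moreover have "Phi (\<lambda>X. 0 * \<psi>s 0 X + 0 * \<psi>s 0 X) = (\<lambda>y. 0 * Phi (\<psi>s 0) y + 0 * Phi (\<psi>s 0) y)"
      using Plin psT unfolding T_def by blast
    moreover have "S 0 = (\<lambda>X. 0 * \<psi>s 0 X + 0 * \<psi>s 0 X)" unfolding S_def by simp
    ultimately show ?case by simp
  next
    case (Suc m)
    have e: "S (Suc m) = (\<lambda>X. 1 * S m X + c m * \<psi>s m X)" unfolding S_def by (simp add: add.commute)
    have "(\<lambda>X. 1 * S m X + c m * \<psi>s m X) \<in> T" using topdual_comb Suc psT unfolding T_def by blast
    moreover have "Phi (\<lambda>X. 1 * S m X + c m * \<psi>s m X) = (\<lambda>y. 1 * Phi (S m) y + c m * Phi (\<psi>s m) y)"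
      using Plin psT Suc unfolding T_def by blast
    ultimately show ?case using Suc e by (simp add: add.commute)
  qed
  have conv: "(\<lambda>k. c k * \<psi>s k X) sums \<psi> X" for X
    unfolding sums_def
  proof (rule tendstoI)
    fix \<epsilon> :: real assume \<epsilon>: "\<epsilon> > 0"
    define U where "U = {a \<in> T. a X \<in> ball (\<psi> X) \<epsilon>}"
    have "openin (weak_top T {(\<lambda>\<psi>. Phi \<psi> y) |y. True}) U" unfolding U_def T_def by (rule weak_open_eval) simp
    hence gen: "generate_topology_on {{a \<in> T. f a \<in> U'} |f U'. f \<in> {(\<lambda>\<psi>. Phi \<psi> y) |y. True} \<and> open U'} U"
      unfolding weak_top_def by (simp add: openin_topology_generated_by_iff)
    have inU: "\<psi> \<in> U" unfolding U_def using psiT \<epsilon> by simp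
    have lim: "\<forall>f\<in>{(\<lambda>\<psi>. Phi \<psi> y) |y. True}. ((\<lambda>m. f (S m)) \<longlongrightarrow> f \<psi>) sequentially"
    proof
      fix f assume "f \<in> {(\<lambda>\<psi>. Phi \<psi> y) |y. True}"
      then obtain y where y: "f = (\<lambda>\<psi>. Phi \<psi> y)" by blast
      have "(\<lambda>m. \<Sum>k<m. c k * Phi (\<psi>s k) y) \<longlonglongrightarrow> g y" using gs[of y] unfolding sums_def .
      thus "((\<lambda>m. f (S m)) \<longlongrightarrow> f \<psi>) sequentially" using ST Phipsi y by simp
    qed
    have "eventually (\<lambda>m. S m \<in> U) sequentially"
      by (rule gen_top_eventually[OF gen inU lim]) (use ST in simp)
    thus "eventually (\<lambda>m. dist (\<Sum>k<m. c k * \<psi>s k X) (\<psi> X) < \<epsilon>) sequentially"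
      by (rule eventually_mono) (simp add: U_def S_def dist_commute)
  qed
  have psnn: "\<psi> X \<ge> 0" if "X \<in> A" for X
    by (rule sums_le[OF _ sums_zero conv]) (use cpos D_pos[OF FM_all psD that] in \<open>simp add: less_imp_le\<close>)
  have pspos: "\<psi> X > 0" if XA: "X \<in> A" "X \<noteq> 0" for X
  proof -
    obtain \<psi>1 where p1: "\<psi>1 \<in> DD P V0 V1 A" "\<psi>1 X > 0" using pos_exists[OF Pos_all XA] by blast
    obtain n where "\<psi>1 \<in> Dn n" using Dn_cover[OF p1(1)] by blast
    then obtain \<psi>2 where "\<psi>2 \<in> Ds" "\<psi>2 X > 0" using density p1(2) by blast
    then obtain j where j: "\<psi>s j X > 0" using rng by (metis imageE)
    have "0 < (\<Sum>k. c k * \<psi>s k X)"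
    proof (rule suminf_pos2)
      show "summable (\<lambda>k. c k * \<psi>s k X)" using conv sums_summable by blast
      show "\<And>k. 0 \<le> c k * \<psi>s k X" using cpos D_pos[OF FM_all psD XA(1)] by (simp add: less_imp_le)
      show "0 < c j * \<psi>s j X" using cpos j by simp
    qed
    thus ?thesis using sums_unique[OF conv] by simp
  qed
  have csum: "summable c"
    by (rule summable_comparison_test'[OF sums_summable[OF hs], where N=0]) (use cle cpos in \<open>simp add: less_imp_le\<close>)
  define Cs where "Cs = suminf c"
  have Cspos: "Cs > 0" unfolding Cs_def
    by (rule suminf_pos2[OF csum, where i=0]) (use cpos in \<open>auto simp: less_imp_le\<close>)
  define \<psi>' where "\<psi>' = (\<lambda>X. inverse Cs * \<psi> X)"
  have psi'T: "\<psi>' \<in> T" unfolding \<psi>'_def T_def by (rule topdual_scale) (use psiT T_def in simp)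
  have sPV: "ereal (- inverse Cs) \<le> sigmaPV P V0 V1 \<psi>'"
    unfolding sigmaPV_def
  proof (rule INF_greatest)
    fix x assume x: "x \<in> P"
    have tk: "- h k \<le> c k * (V0 x - \<psi>s k (V1 x))" for k
    proof -
      have "sigmaPV P V0 V1 (\<psi>s k) \<le> ereal (V0 x - \<psi>s k (V1 x))"
        unfolding sigmaPV_def using x by (intro INF_lower) auto
      moreover have "ereal (- real (M k)) \<le> sigmaPV P V0 V1 (\<psi>s k)" using psM[of k] unfolding Dn_def by blast
      ultimately have "- real (M k) \<le> V0 x - \<psi>s k (V1 x)" by (metis ereal_less_eq(3) order_trans)
      hence "c k * (- real (M k)) \<le> c k * (V0 x - \<psi>s k (V1 x))"
        by (rule mult_left_mono) (use cpos[of k] in simp)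
      thus ?thesis using cM[of k] by simp
    qed
    have s1: "(\<lambda>k. c k * V0 x) sums (Cs * V0 x)" unfolding Cs_def using sums_mult2[OF summable_sums[OF csum]] .
    have s2: "(\<lambda>k. c k * V0 x - c k * \<psi>s k (V1 x)) sums (Cs * V0 x - \<psi> (V1 x))" by (rule sums_diff[OF s1 conv])
    have "-1 \<le> Cs * V0 x - \<psi> (V1 x)"
      by (rule sums_le[OF _ sums_minus[OF hs] s2]) (use tk in \<open>simp add: right_diff_distrib\<close>)
    hence "- inverse Cs \<le> V0 x - inverse Cs * \<psi> (V1 x)"
      using Cspos by (simp add: field_simps)
    thus "ereal (- inverse Cs) \<le> ereal (V0 x - \<psi>' (V1 x))" unfolding \<psi>'_def by simp
  qed
  have sA: "0 \<le> sigmaA A \<psi>'" unfolding sigmaA_def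
    by (rule INF_greatest) (use psnn Cspos in \<open>simp add: \<psi>'_def\<close>)
  have "\<psi>' \<in> DDstr P V0 V1 A"
    unfolding DDstr_def DD_def
  proof (intro CollectI conjI ballI)
    show "\<psi>' \<in> topdual TYPE('x)" using psi'T unfolding T_def .
    show "- \<infinity> < sigmaA A \<psi>'" using sA by (auto intro: order_less_le_trans[of _ 0])
    show "- \<infinity> < sigmaPV P V0 V1 \<psi>'" using sPV by (auto intro: order_less_le_trans)
    fix X assume "X \<in> A - {0}"
    thus "0 < \<psi>' X" using pspos Cspos unfolding \<psi>'_def by simp
  qed
  thus ?thesis by blast
qed

end

lemma ereal_approx_le:
  assumes K: "K \<ge> 0" and h: "\<And>t. 0 < t \<Longrightarrow> t \<le> 1 \<Longrightarrow> ereal (a - t * K) \<le> S"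
  shows "ereal a \<le> S"
proof (rule ccontr)
  assume "\<not> ereal a \<le> S"
  hence "S < ereal a" by simp
  then obtain r where r: "S < ereal r" "ereal r < ereal a" using ereal_dense2 by blast
  hence ra: "r < a" by simp
  define t where "t = min 1 ((a - r) / (K + 1))"
  have t: "0 < t" "t \<le> 1" unfolding t_def using ra K by auto
  have "t * K \<le> ((a - r) / (K + 1)) * K" unfolding t_def using K by (intro mult_right_mono) auto
  also have "\<dots> < a - r"
  proof -
    have "((a - r) / (K + 1)) * K = (a - r) * (K / (K + 1))" by simp
    also have "\<dots> < (a - r) * 1" using ra K by (intro mult_strict_left_mono) auto
    finally show ?thesis by simp
  qed
  finally have "r < a - t * K" by simp
  hence "ereal r < ereal (a - t * K)" by simp
  hence "ereal r < S" using h[OF t] by (rule order_less_le_trans)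
  thus False using r(1) by simp
qed

context
  fixes Xp :: "'x::{real_vector,topological_space} set"
    and P :: "(real^'n) set"
    and V0 :: "real^'n \<Rightarrow> real"
    and V1 :: "real^'n \<Rightarrow> 'x"
    and A :: "'x set"
  assumes tvs: "tvs TYPE('x)"
    and P0: "0 \<in> P"
    and V00: "V0 0 = 0"
    and V10: "V1 0 = 0"
    and A0: "0 \<in> A"
    and lc: "locally_convex TYPE('x)"
    and proper: "proper_fun (rho P V0 V1 A)"
    and cvx: "convex_efun (rho P V0 V1 A)"
    and lsc_rho: "lsc (rho P V0 V1 A)"
    and Acone: "convex_cone A"
begin

lemmas FM_all2 = tvs P0 V00 V10 A0 lc proper cvx lsc_rho Acone

lemma sigmaA_Dstr: "\<psi> \<in> DDstr P V0 V1 A \<Longrightarrow> sigmaA A \<psi> = 0"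
proof -
  assume d: "\<psi> \<in> DDstr P V0 V1 A"
  hence dd: "\<psi> \<in> DD P V0 V1 A" unfolding DDstr_def by simp
  have "0 \<le> sigmaA A \<psi>" unfolding sigmaA_def
    by (rule INF_greatest) (use D_pos[OF FM_all2 dd] in simp)
  moreover have "\<psi> 0 = 0" using dd unfolding DD_def topdual_def by (simp add: linF)
  hence "sigmaA A \<psi> \<le> 0" unfolding sigmaA_def using A0 by (metis INF_lower zero_ereal_def)
  ultimately show ?thesis by simp
qed

lemma SUP_Dstr:
  assumes psi0: "\<psi>0 \<in> DDstr P V0 V1 A"
  shows "rho P V0 V1 A X = (SUP \<psi>\<in>DDstr P V0 V1 A. sigmaPV P V0 V1 \<psi> - ereal (\<psi> X))"
proof -
  have sub: "DDstr P V0 V1 A \<subseteq> DD P V0 V1 A" unfolding DDstr_def by auto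
  have d0: "\<psi>0 \<in> DD P V0 V1 A" using psi0 sub by blast
  obtain s0 where s0: "sigmaPV P V0 V1 \<psi>0 = ereal s0" using D_real[OF FM_all2 d0] by blast
  have "(SUP \<psi>\<in>DD P V0 V1 A. sigmaPV P V0 V1 \<psi> - ereal (\<psi> X))
      = (SUP \<psi>\<in>DDstr P V0 V1 A. sigmaPV P V0 V1 \<psi> - ereal (\<psi> X))"
  proof (rule antisym)
    show "(SUP \<psi>\<in>DDstr P V0 V1 A. sigmaPV P V0 V1 \<psi> - ereal (\<psi> X))
        \<le> (SUP \<psi>\<in>DD P V0 V1 A. sigmaPV P V0 V1 \<psi> - ereal (\<psi> X))"
      using sub by (rule SUP_subset_mono) simp
    show "(SUP \<psi>\<in>DD P V0 V1 A. sigmaPV P V0 V1 \<psi> - ereal (\<psi> X))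
        \<le> (SUP \<psi>\<in>DDstr P V0 V1 A. sigmaPV P V0 V1 \<psi> - ereal (\<psi> X))"
    proof (rule SUP_least)
      fix \<phi> assume d: "\<phi> \<in> DD P V0 V1 A"
      obtain s where s: "sigmaPV P V0 V1 \<phi> = ereal s" using D_real[OF FM_all2 d] by blast
      define a where "a = s - \<phi> X"
      define b where "b = s0 - \<psi>0 X"
      have "ereal a \<le> (SUP \<psi>\<in>DDstr P V0 V1 A. sigmaPV P V0 V1 \<psi> - ereal (\<psi> X))"
      proof (rule ereal_approx_le[of "\<bar>a\<bar> + \<bar>b\<bar>"])
        show "0 \<le> \<bar>a\<bar> + \<bar>b\<bar>" by simp
        fix t :: real assume t: "0 < t" "t \<le> 1"
        define \<psi>t where "\<psi>t = (\<lambda>Z. (1 - t) * \<phi> Z + t * \<psi>0 Z)"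
        have T: "\<psi>t \<in> topdual TYPE('x)" unfolding \<psi>t_def
          by (rule topdual_comb) (use d d0 in \<open>auto simp: DD_def\<close>)
        have nn: "\<psi>t W \<ge> 0" if "W \<in> A" for W
          using D_pos[OF FM_all2 d that] D_pos[OF FM_all2 d0 that] t unfolding \<psi>t_def by simp
        have sA: "0 \<le> sigmaA A \<psi>t" unfolding sigmaA_def by (rule INF_greatest) (use nn in simp)
        have sP: "ereal ((1 - t) * s + t * s0) \<le> sigmaPV P V0 V1 \<psi>t" unfolding sigmaPV_def
        proof (rule INF_greatest)
          fix x assume x: "x \<in> P"
          have "sigmaPV P V0 V1 \<phi> \<le> ereal (V0 x - \<phi> (V1 x))" unfolding sigmaPV_def using x by (intro INF_lower) auto
          hence e1: "s \<le> V0 x - \<phi> (V1 x)" using s by simp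
          have "sigmaPV P V0 V1 \<psi>0 \<le> ereal (V0 x - \<psi>0 (V1 x))" unfolding sigmaPV_def using x by (intro INF_lower) auto
          hence e2: "s0 \<le> V0 x - \<psi>0 (V1 x)" using s0 by simp
          have "(1 - t) * s \<le> (1 - t) * (V0 x - \<phi> (V1 x))" using e1 t by (intro mult_left_mono) auto
          moreover have "t * s0 \<le> t * (V0 x - \<psi>0 (V1 x))" using e2 t by (intro mult_left_mono) auto
          ultimately have "(1 - t) * s + t * s0 \<le> V0 x - \<psi>t (V1 x)" unfolding \<psi>t_def by (simp add: algebra_simps)
          thus "ereal ((1 - t) * s + t * s0) \<le> ereal (V0 x - \<psi>t (V1 x))" by simp
        qed
        have str: "\<psi>t \<in> DDstr P V0 V1 A" unfolding DDstr_def DD_def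
        proof (intro CollectI conjI ballI)
          show "\<psi>t \<in> topdual TYPE('x)" by (rule T)
          show "- \<infinity> < sigmaA A \<psi>t" using sA by (auto intro: order_less_le_trans[of _ 0])
          show "- \<infinity> < sigmaPV P V0 V1 \<psi>t" using sP by (auto intro: order_less_le_trans)
          fix W assume W: "W \<in> A - {0}"
          have "\<psi>0 W > 0" using psi0 W unfolding DDstr_def by blast
          moreover have "\<phi> W \<ge> 0" using D_pos[OF FM_all2 d] W by blast
          ultimately show "0 < \<psi>t W" unfolding \<psi>t_def using t
            by (smt (verit, ccfv_SIG) mult_nonneg_nonneg mult_pos_pos)
        qed
        have "ereal (a - t * (\<bar>a\<bar> + \<bar>b\<bar>)) \<le> ereal ((1 - t) * s + t * s0 - \<psi>t X)"
        proof -
          have "(1 - t) * s + t * s0 - \<psi>t X = a - t * (a - b)" unfolding \<psi>t_def a_def b_def by (simp add: algebra_simps)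
          moreover have "t * (a - b) \<le> t * (\<bar>a\<bar> + \<bar>b\<bar>)" using t by (intro mult_left_mono) auto
          ultimately show ?thesis by simp
        qed
        also have "\<dots> \<le> sigmaPV P V0 V1 \<psi>t - ereal (\<psi>t X)"
          using sP by (metis ereal_minus(1) ereal_minus_mono order_refl)
        also have "\<dots> \<le> (SUP \<psi>\<in>DDstr P V0 V1 A. sigmaPV P V0 V1 \<psi> - ereal (\<psi> X))"
          using str by (rule SUP_upper)
        finally show "ereal (a - t * (\<bar>a\<bar> + \<bar>b\<bar>)) \<le> (SUP \<psi>\<in>DDstr P V0 V1 A. sigmaPV P V0 V1 \<psi> - ereal (\<psi> X))" .
      qed
      thus "sigmaPV P V0 V1 \<phi> - ereal (\<phi> X) \<le> (SUP \<psi>\<in>DDstr P V0 V1 A. sigmaPV P V0 V1 \<psi> - ereal (\<psi> X))"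
        using s unfolding a_def by simp
    qed
  qed
  thus ?thesis using FM_eq[OF FM_all2] by simp
qed

end

theorem mainTheorem17:
  fixes Xp :: "'x::{real_vector,topological_space} set"
    and P :: "(real^'n) set"
    and V0 :: "real^'n \<Rightarrow> real"
    and V1 :: "real^'n \<Rightarrow> 'x"
    and A :: "'x set"
  assumes tvs: "tvs TYPE('x)"
    and Xp: "convex_cone Xp"
    and P0: "0 \<in> P"
    and V00: "V0 0 = 0" and V0neg: "\<forall>x. V0 x \<ge> - V0 (- x)"
    and V10: "V1 0 = 0" and V1neg: "\<forall>x. - V1 (- x) - V1 x \<in> Xp"
    and A0: "0 \<in> A" and AXp: "\<forall>X\<in>A. \<forall>p\<in>Xp. X + p \<in> A"
    and lc: "locally_convex TYPE('x)"
    and proper: "proper_fun (rho P V0 V1 A)"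
    and cvx: "convex_efun (rho P V0 V1 A)"
    and lsc_rho: "lsc (rho P V0 V1 A)"
    and adm: "admissible_pair_via TYPE('y::real_normed_vector) TYPE('x)"
    and Acl: "closed A" and Acone: "convex_cone A" and Apointed: "A \<inter> uminus ` A = {0}"
    and Pcl: "closed P"
    and V0lsc: "lsc V0"
    and V1as: "anti_star_shaped Xp V1"
    and V1usc: "usc_wrt Xp V1"
    and L0: "LL P V0 V1 A = {0}"
  shows "DDstr P V0 V1 A \<noteq> {} \<and>
         (\<forall>\<psi> \<in> DDstr P V0 V1 A. sigmaA A \<psi> = 0) \<and>
         (\<forall>X. rho P V0 V1 A X = (SUP \<psi> \<in> DDstr P V0 V1 A. sigmaPV P V0 V1 \<psi> - ereal (\<psi> X)))"
proof -
  obtain Dy :: "'y set" where Dy: "countable Dy" "closure Dy = UNIV"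
    using adm unfolding admissible_pair_via_def by blast
  obtain Phi :: "('x \<Rightarrow> real) \<Rightarrow> ('y \<Rightarrow> real)" where
    bij: "bij_betw Phi (topdual TYPE('x)) {g. bounded_linear g}"
    and Plin: "\<forall>\<psi>\<in>topdual TYPE('x). \<forall>\<phi>\<in>topdual TYPE('x). \<forall>a b.
            Phi (\<lambda>X. a * \<psi> X + b * \<phi> X) = (\<lambda>y. a * Phi \<psi> y + b * Phi \<phi> y)"
    and Ptop: "\<forall>U. openin (weak_top (topdual TYPE('x)) {(\<lambda>\<psi>. \<psi> X) |X. True}) U \<longrightarrow>
             openin (weak_top (topdual TYPE('x)) {(\<lambda>\<psi>. Phi \<psi> y) |y. True}) U"
    using adm unfolding admissible_pair_via_def by blast
  have Dyne: "Dy \<noteq> {}" using Dy(2) by auto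
  have dense: "closure (range (from_nat_into Dy)) = UNIV" using Dy Dyne by simp
  obtain \<psi>0 where psi0: "\<psi>0 \<in> DDstr P V0 V1 A"
    using Dstr_exists[OF tvs P0 V00 V10 A0 lc proper cvx lsc_rho Acone Xp AXp Acl Apointed Pcl V1as V1usc L0
        bij Plin Ptop dense] by blast
  note F = tvs P0 V00 V10 A0 lc proper cvx lsc_rho Acone
  show ?thesis using psi0 sigmaA_Dstr[OF F] SUP_Dstr[OF F psi0] by blast
qed


end
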